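(* Let $S,T$ be two symmetric scoring functions on $\mathcal{A}^*\times\mathcal{A}^*$. If $\max_{(x,y)\in\mathrm{SET}_{S,T}}x$ has a unique maximiser $(x_0,y_0)$, then $$\max_{\pi\in\nu^*_{n,S}}\frac{T_\pi(X_{[1,n]},Y_{[1,n]})}{n}\to y_0\quad\text{and}\quad\min_{\pi\in\nu^*_{n,S}}\frac{T_\pi(X_{[1,n]},Y_{[1,n]})}{n}\to y_0\quad\text{almost surely as }n\to\infty.$$
   Context: $\mathcal{A}$ finite alphabet, $\mathcal{A}^*=\mathcal{A}\cup\{G\}$ with gap symbol $G$. A symmetric scoring function is $R:\mathcal{A}^*\times\mathcal{A}^*\to\mathbb{R}$ with $R(a,b)=R(b,a)$, $R(G,G)=0$. An alignment of $x_{[1,n]},y_{[1,n]}$ is a pair of increasing sequences $1\le i_1<\dots<i_k\le n$, $1\le j_1<\dots<j_k\le n$; $\Lambda_n$ is the set of them; its score is $R_\nu(x_{[1,n]},y_{[1,n]})=\sum_{\ell}R(x_{i_\ell},y_{j_\ell})+\sum_{i\notin\{i_\ell\}}R(x_i,G)+\sum_{j\notin\{j_\ell\}}R(G,y_j)$. $X_1,X_2,\dots,Y_1,Y_2,\dots$ are i.i.d. random letters from a fixed distribution on $\mathcal{A}$; $L_{n,R}=\max_{\nu\in\Lambda_n}R_\nu(X_{[1,n]},Y_{[1,n]})$, and $\nu^*_{n,R}$ is the random set of $\nu\in\Lambda_n$ attaining this maximum; $\lambda_R$ is the a.s. limit of $L_{n,R}/n$. $\mathrm{SET}_{S,T}=\{(x,y):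 ax+by\le\lambda_{aS+bT}\ \forall(a,b)\in\mathbb{R}^2\}$, the a.s. Hausdorff limit of the closed convex hulls of $\{(S_\nu/n,T_\nu/n):\nu\in\Lambda_n\}$. *)

theory Defs
  imports "HOL-Probability.Probability"
begin

text \<open>Letters: a finite type 'a; the extended alphabet A* is 'a option, with None = gap G.\<close>

type_synonym 'a score = "'a option \<Rightarrow> 'a option \<Rightarrow> real"

definition symmetric_score :: "'a score \<Rightarrow> bool" where
  "symmetric_score R \<longleftrightarrow> (\<forall>a b. R a b = R b a) \<and> R None None = 0"

definition alignments :: "nat \<Rightarrow> (nat list \<times> nat list) set" where
  "alignments n = {(is, js). length is = length js \<and> sorted_wrt (<) is \<and> sorted_wrt (<) js
      \<and> set is \<subseteq> {1..n} \<and> set js \<subseteq> {1..n}}"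

definition align_score ::
  "'a score \<Rightarrow> nat \<Rightarrow> nat list \<times> nat list \<Rightarrow> (nat \<Rightarrow> 'a) \<Rightarrow> (nat \<Rightarrow> 'a) \<Rightarrow> real" where
  "align_score R n \<nu> x y =
     (\<Sum>l<length (fst \<nu>). R (Some (x (fst \<nu> ! l))) (Some (y (snd \<nu> ! l))))
     + (\<Sum>i\<in>{1..n} - set (fst \<nu>). R (Some (x i)) None)
     + (\<Sum>j\<in>{1..n} - set (snd \<nu>). R None (Some (y j)))"

definition opt_score :: "'a score \<Rightarrow> nat \<Rightarrow> (nat \<Rightarrow> 'a) \<Rightarrow> (nat \<Rightarrow> 'a) \<Rightarrow> real" where
  "opt_score R n x y = Max ((\<lambda>\<nu>. align_score R n \<nu> x y) ` alignments n)"

definition opt_alignments ::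
  "'a score \<Rightarrow> nat \<Rightarrow> (nat \<Rightarrow> 'a) \<Rightarrow> (nat \<Rightarrow> 'a) \<Rightarrow> (nat list \<times> nat list) set" where
  "opt_alignments R n x y = {\<nu> \<in> alignments n. align_score R n \<nu> x y = opt_score R n x y}"

definition lam :: "'w measure \<Rightarrow> (nat \<Rightarrow> 'w \<Rightarrow> 'a) \<Rightarrow> (nat \<Rightarrow> 'w \<Rightarrow> 'a) \<Rightarrow> 'a score \<Rightarrow> real" where
  "lam M X Y R = (THE c. AE \<omega> in M.
      (\<lambda>n. opt_score R n (\<lambda>i. X i \<omega>) (\<lambda>i. Y i \<omega>) / real n) \<longlonglongrightarrow> c)"

definition SET :: "'w measure \<Rightarrow> (nat \<Rightarrow> 'w \<Rightarrow> 'a) \<Rightarrow> (nat \<Rightarrow> 'w \<Rightarrow> 'a) \<Rightarrow> 'a score \<Rightarrow> 'a score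
    \<Rightarrow> (real \<times> real) set" where
  "SET M X Y S T = {(x, y). \<forall>a b. a * x + b * y \<le> lam M X Y (\<lambda>u v. a * S u v + b * T u v)}"

definition iid_letters :: "'w measure \<Rightarrow> 'a pmf \<Rightarrow> (nat \<Rightarrow> 'w \<Rightarrow> 'a) \<Rightarrow> (nat \<Rightarrow> 'w \<Rightarrow> 'a) \<Rightarrow> bool" where
  "iid_letters M p X Y \<longleftrightarrow>
     prob_space.indep_vars M (\<lambda>_. count_space UNIV) (\<lambda>k. case k of Inl i \<Rightarrow> X i | Inr j \<Rightarrow> Y j) UNIV
     \<and> (\<forall>i. distr M (count_space UNIV) (X i) = measure_pmf p)
     \<and> (\<forall>i. distr M (count_space UNIV) (Y i) = measure_pmf p)"

end

theory Submission
  imports Defs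
begin

lemma sum_lessThan_add_split:
  fixes f :: "nat \<Rightarrow> 'b::comm_monoid_add"
  shows "(\<Sum>l<a+b. f l) = (\<Sum>l<a. f l) + (\<Sum>l<b. f (a+l))"
  by (induction b) (simp_all add: add.assoc)

lemma alignmentsD:
  assumes "(is, js) \<in> alignments n"
  shows "length is = length js" "distinct is" "distinct js" "set is \<subseteq> {1..n}" "set js \<subseteq> {1..n}"
    "sorted_wrt (<) is" "sorted_wrt (<) js" "length is \<le> n" "length js \<le> n"
proof -
  have d: "distinct is" "distinct js" using assms by (auto simp: alignments_def strict_sorted_iff)
  have s: "set is \<subseteq> {1..n}" "set js \<subseteq> {1..n}" using assms by (auto simp: alignments_def)
  show "length is = length js" "distinct is" "distinct js" "set is \<subseteq> {1..n}" "set js \<subseteq> {1..n}"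
    "sorted_wrt (<) is" "sorted_wrt (<) js" using assms d s by (auto simp: alignments_def)
  have "length is = card (set is)" using d by (simp add: distinct_card)
  also have "\<dots> \<le> card {1..n}" using s by (intro card_mono) auto
  finally show "length is \<le> n" by simp
  have "length js = card (set js)" using d by (simp add: distinct_card)
  also have "\<dots> \<le> card {1..n}" using s by (intro card_mono) auto
  finally show "length js \<le> n" by simp
qed

lemma finite_alignments: "finite (alignments n)"
proof -
  have "alignments n \<subseteq> {xs. set xs \<subseteq> {1..n} \<and> length xs \<le> n} \<times> {xs. set xs \<subseteq> {1..n} \<and> length xs \<le> n}"
    using alignmentsD by fastforce
  moreover have "finite ({xs. set xs \<subseteq> {1..n} \<and> length xs \<le> n} \<times> {xs. set xs \<subseteq> {1..n} \<and> length xs \<le> n})"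
    by (intro finite_cartesian_product finite_lists_length_le) auto
  ultimately show ?thesis by (rule finite_subset)
qed

lemma nil_alignments: "([], []) \<in> alignments n"
  by (simp add: alignments_def)

lemma alignments_ne: "alignments n \<noteq> {}"
  using nil_alignments by blast

definition Kb :: "'a::finite score \<Rightarrow> real" where
  "Kb R = Max ((\<lambda>(u,v). \<bar>R u v\<bar>) ` UNIV)"

lemma Kb_bound: "\<bar>R u v\<bar> \<le> Kb (R :: 'a::finite score)"
  unfolding Kb_def by (rule Max_ge) (auto intro!: image_eqI[of _ _ "(u,v)"])

lemma Kb_nonneg: "0 \<le> Kb (R :: 'a::finite score)"
  using Kb_bound[of R None None] by linarith

lemma align_score_bound:
  fixes R :: "'a::finite score"
  assumes "\<nu> \<in> alignments n"
  shows "\<bar>align_score R n \<nu> x y\<bar> \<le> 3 * real n * Kb R"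
proof -
  obtain ia ja where nu: "\<nu> = (ia, ja)" by (cases \<nu>)
  note D = alignmentsD[OF assms[unfolded nu]]
  have K0: "0 \<le> Kb R" by (rule Kb_nonneg)
  have a: "\<bar>\<Sum>l<length ia. R (Some (x (ia ! l))) (Some (y (ja ! l)))\<bar> \<le> real n * Kb R"
  proof -
    have "\<bar>\<Sum>l<length ia. R (Some (x (ia ! l))) (Some (y (ja ! l)))\<bar>
        \<le> (\<Sum>l<length ia. \<bar>R (Some (x (ia ! l))) (Some (y (ja ! l)))\<bar>)" by (rule sum_abs)
    also have "\<dots> \<le> (\<Sum>l<length ia. Kb R)" by (intro sum_mono Kb_bound)
    also have "\<dots> = real (length ia) * Kb R" by simp
    also have "\<dots> \<le> real n * Kb R" using D(8) K0 by (intro mult_right_mono) auto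
    finally show ?thesis .
  qed
  have b: "\<bar>\<Sum>i\<in>{1..n} - set ia. R (Some (x i)) None\<bar> \<le> real n * Kb R"
  proof -
    have "\<bar>\<Sum>i\<in>{1..n} - set ia. R (Some (x i)) None\<bar> \<le> (\<Sum>i\<in>{1..n} - set ia. \<bar>R (Some (x i)) None\<bar>)"
      by (rule sum_abs)
    also have "\<dots> \<le> (\<Sum>i\<in>{1..n} - set ia. Kb R)" by (intro sum_mono Kb_bound)
    also have "\<dots> = real (card ({1..n} - set ia)) * Kb R" by simp
    also have "\<dots> \<le> real n * Kb R"
    proof -
      have "card ({1..n} - set ia) \<le> card {1..n::nat}" by (intro card_mono) auto
      then show ?thesis using K0 by (intro mult_right_mono) auto
    qed
    finally show ?thesis .
  qed
  have c: "\<bar>\<Sum>j\<in>{1..n} - set ja. R None (Some (y j))\<bar> \<le> real n * Kb R"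
  proof -
    have "\<bar>\<Sum>j\<in>{1..n} - set ja. R None (Some (y j))\<bar> \<le> (\<Sum>j\<in>{1..n} - set ja. \<bar>R None (Some (y j))\<bar>)"
      by (rule sum_abs)
    also have "\<dots> \<le> (\<Sum>j\<in>{1..n} - set ja. Kb R)" by (intro sum_mono Kb_bound)
    also have "\<dots> = real (card ({1..n} - set ja)) * Kb R" by simp
    also have "\<dots> \<le> real n * Kb R"
    proof -
      have "card ({1..n} - set ja) \<le> card {1..n::nat}" by (intro card_mono) auto
      then show ?thesis using K0 by (intro mult_right_mono) auto
    qed
    finally show ?thesis .
  qed
  show ?thesis using a b c unfolding nu align_score_def fst_conv snd_conv by linarith
qed

lemma align_score_lin:
  "align_score (\<lambda>u v. a * S u v + b * T u v) n \<nu> x y = a * align_score S n \<nu> x y + b * align_score T n \<nu> x y"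
  by (simp add: align_score_def sum.distrib sum_distrib_left algebra_simps)

lemma align_score_diff:
  "align_score (\<lambda>u v. S u v - T u v) n \<nu> x y = align_score S n \<nu> x y - align_score T n \<nu> x y"
  by (simp add: align_score_def sum_subtractf algebra_simps)

lemma Max_image_diff_le:
  fixes f g :: "'b \<Rightarrow> real"
  assumes "finite A" "A \<noteq> {}" "\<And>a. a \<in> A \<Longrightarrow> \<bar>f a - g a\<bar> \<le> D"
  shows "\<bar>Max (f ` A) - Max (g ` A)\<bar> \<le> D"
proof -
  have "Max (f ` A) \<in> f ` A" "Max (g ` A) \<in> g ` A" using assms by (intro Max_in; auto)+
  then obtain a b where a: "a \<in> A" "f a = Max (f ` A)" and b: "b \<in> A" "g b = Max (g ` A)"
    by (metis imageE)
  have "g a \<le> Max (g ` A)" using a assms by (intro Max_ge) auto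
  moreover have "f b \<le> Max (f ` A)" using b assms by (intro Max_ge) auto
  ultimately show ?thesis using assms(3)[OF a(1)] assms(3)[OF b(1)] a b by linarith
qed

lemma Min_image_diff_le:
  fixes f g :: "'b \<Rightarrow> real"
  assumes "finite A" "A \<noteq> {}" "\<And>a. a \<in> A \<Longrightarrow> \<bar>f a - g a\<bar> \<le> D"
  shows "\<bar>Min (f ` A) - Min (g ` A)\<bar> \<le> D"
proof -
  have "Min (f ` A) \<in> f ` A" "Min (g ` A) \<in> g ` A" using assms by (intro Min_in; auto)+
  then obtain a b where a: "a \<in> A" "f a = Min (f ` A)" and b: "b \<in> A" "g b = Min (g ` A)"
    by (metis imageE)
  have "g a \<ge> Min (g ` A)" using a assms by (intro Min_le) auto
  moreover have "f b \<ge> Min (f ` A)" using b assms by (intro Min_le) auto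
  ultimately show ?thesis using assms(3)[OF a(1)] assms(3)[OF b(1)] a b by linarith
qed

lemma opt_score_bound:
  fixes R :: "'a::finite score"
  shows "\<bar>opt_score R n x y\<bar> \<le> 3 * real n * Kb R"
proof -
  have "\<bar>opt_score R n x y - Max ((\<lambda>\<nu>. 0) ` alignments n)\<bar> \<le> 3 * real n * Kb R"
    unfolding opt_score_def
    by (rule Max_image_diff_le) (auto simp: finite_alignments alignments_ne align_score_bound)
  moreover have "Max ((\<lambda>\<nu>. 0::real) ` alignments n) = 0"
    using alignments_ne by (simp add: image_constant_conv)
  ultimately show ?thesis by simp
qed

lemma opt_score_lipschitz:
  fixes R R' :: "'a::finite score"
  shows "\<bar>opt_score R n x y - opt_score R' n x y\<bar> \<le> 3 * real n * Kb (\<lambda>u v. R u v - R' u v)"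
  unfolding opt_score_def
  by (rule Max_image_diff_le)
     (auto simp: finite_alignments alignments_ne align_score_diff[symmetric] align_score_bound)

lemma opt_score_ge:
  "\<nu> \<in> alignments n \<Longrightarrow> align_score R n \<nu> x y \<le> opt_score R n x y"
  unfolding opt_score_def by (rule Max_ge) (auto simp: finite_alignments)

lemma opt_score_attained:
  "\<exists>\<nu>\<in>alignments n. align_score R n \<nu> x y = opt_score R n x y"
proof -
  have "opt_score R n x y \<in> (\<lambda>\<nu>. align_score R n \<nu> x y) ` alignments n"
    unfolding opt_score_def by (intro Max_in) (auto simp: finite_alignments alignments_ne)
  then show ?thesis by auto
qed

lemma opt_alignments_ne: "opt_alignments R n x y \<noteq> {}"
  using opt_score_attained[of n R x y] by (auto simp: opt_alignments_def)

lemma finite_opt_alignments: "finite (opt_alignments R n x y)"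
  by (rule finite_subset[OF _ finite_alignments[of n]]) (auto simp: opt_alignments_def)

lemma align_score_local:
  assumes "\<nu> \<in> alignments n" "\<And>i. i \<in> {1..n} \<Longrightarrow> x i = x' i" "\<And>i. i \<in> {1..n} \<Longrightarrow> y i = y' i"
  shows "align_score R n \<nu> x y = align_score R n \<nu> x' y'"
proof -
  obtain ia ja where nu: "\<nu> = (ia, ja)" by (cases \<nu>)
  note D = alignmentsD[OF assms(1)[unfolded nu]]
  have "ia ! l \<in> {1..n}" "ja ! l \<in> {1..n}" if "l < length ia" for l
  proof -
    have "ia ! l \<in> set ia" "ja ! l \<in> set ja" using that D(1) by auto
    then show "ia ! l \<in> {1..n}" "ja ! l \<in> {1..n}" using D(4,5) by blast+
  qed
  then show ?thesis unfolding nu align_score_def using assms(2,3)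
    by (intro arg_cong2[where f="(+)"] sum.cong) auto
qed

lemma opt_score_local:
  assumes "\<And>i. i \<in> {1..n} \<Longrightarrow> x i = x' i" "\<And>i. i \<in> {1..n} \<Longrightarrow> y i = y' i"
  shows "opt_score R n x y = opt_score R n x' y'"
  unfolding opt_score_def using align_score_local[OF _ assms]
  by (intro arg_cong[where f=Max] image_cong) auto

lemma sum_diff_one:
  fixes f g :: "'b \<Rightarrow> real"
  assumes "finite A" "\<And>j. j \<in> A \<Longrightarrow> j \<noteq> k \<Longrightarrow> f j = g j"
  shows "\<bar>sum f A - sum g A\<bar> \<le> \<bar>f k - g k\<bar>"
proof (cases "k \<in> A")
  case True
  have "sum f A = f k + sum f (A - {k})" "sum g A = g k + sum g (A - {k})"
    using True assms(1) by (simp_all add: sum.remove)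
  moreover have "sum f (A - {k}) = sum g (A - {k})" using assms(2) by (intro sum.cong) auto
  ultimately show ?thesis by simp
next
  case False
  then have "sum f A = sum g A" using assms(2) by (intro sum.cong) auto
  then show ?thesis by simp
qed

lemma distinct_index_ex:
  assumes "distinct xs"
  shows "\<exists>l0. \<forall>l<length xs. l \<noteq> l0 \<longrightarrow> xs ! l \<noteq> i"
proof (cases "i \<in> set xs")
  case True
  then obtain l0 where "l0 < length xs" "xs ! l0 = i" by (auto simp: in_set_conv_nth)
  then show ?thesis using assms by (metis nth_eq_iff_index_eq)
next
  case False
  then show ?thesis by (metis nth_mem)
qed

lemma align_score_upd_x:
  fixes R :: "'a::finite score"
  assumes "\<nu> \<in> alignments n"
  shows "\<bar>align_score R n \<nu> x y - align_score R n \<nu> (x(i:=a)) y\<bar> \<le> 4 * Kb R"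
proof -
  obtain ia ja where nu: "\<nu> = (ia, ja)" by (cases \<nu>)
  note D = alignmentsD[OF assms[unfolded nu]]
  obtain l0 where l0: "\<forall>l<length ia. l \<noteq> l0 \<longrightarrow> ia ! l \<noteq> i" using distinct_index_ex[OF D(2)] by blast
  have 1: "\<bar>(\<Sum>l<length ia. R (Some (x (ia ! l))) (Some (y (ja ! l))))
          - (\<Sum>l<length ia. R (Some ((x(i:=a)) (ia ! l))) (Some (y (ja ! l))))\<bar>
       \<le> \<bar>R (Some (x (ia ! l0))) (Some (y (ja ! l0))) - R (Some ((x(i:=a)) (ia ! l0))) (Some (y (ja ! l0)))\<bar>"
    by (rule sum_diff_one) (use l0 in auto)
  have 2: "\<bar>(\<Sum>j\<in>{1..n} - set ia. R (Some (x j)) None) - (\<Sum>j\<in>{1..n} - set ia. R (Some ((x(i:=a)) j)) None)\<bar>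
       \<le> \<bar>R (Some (x i)) None - R (Some ((x(i:=a)) i)) None\<bar>"
    by (rule sum_diff_one) auto
  have 3: "\<bar>R u v - R u' v'\<bar> \<le> 2 * Kb R" for u v u' v'
    using Kb_bound[of R u v] Kb_bound[of R u' v'] by linarith
  show ?thesis unfolding nu align_score_def fst_conv snd_conv
    using 1 2 3[of "Some (x (ia ! l0))" "Some (y (ja ! l0))" "Some ((x(i:=a)) (ia ! l0))" "Some (y (ja ! l0))"]
      3[of "Some (x i)" None "Some ((x(i:=a)) i)" None] by linarith
qed

lemma align_score_upd_y:
  fixes R :: "'a::finite score"
  assumes "\<nu> \<in> alignments n"
  shows "\<bar>align_score R n \<nu> x y - align_score R n \<nu> x (y(i:=a))\<bar> \<le> 4 * Kb R"
proof -
  obtain ia ja where nu: "\<nu> = (ia, ja)" by (cases \<nu>)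
  note D = alignmentsD[OF assms[unfolded nu]]
  obtain l0 where l0: "\<forall>l<length ja. l \<noteq> l0 \<longrightarrow> ja ! l \<noteq> i" using distinct_index_ex[OF D(3)] by blast
  have 1: "\<bar>(\<Sum>l<length ia. R (Some (x (ia ! l))) (Some (y (ja ! l))))
          - (\<Sum>l<length ia. R (Some (x (ia ! l))) (Some ((y(i:=a)) (ja ! l))))\<bar>
       \<le> \<bar>R (Some (x (ia ! l0))) (Some (y (ja ! l0))) - R (Some (x (ia ! l0))) (Some ((y(i:=a)) (ja ! l0)))\<bar>"
    by (rule sum_diff_one) (use l0 D(1) in auto)
  have 2: "\<bar>(\<Sum>j\<in>{1..n} - set ja. R None (Some (y j))) - (\<Sum>j\<in>{1..n} - set ja. R None (Some ((y(i:=a)) j)))\<bar>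
       \<le> \<bar>R None (Some (y i)) - R None (Some ((y(i:=a)) i))\<bar>"
    by (rule sum_diff_one) auto
  have 3: "\<bar>R u v - R u' v'\<bar> \<le> 2 * Kb R" for u v u' v'
    using Kb_bound[of R u v] Kb_bound[of R u' v'] by linarith
  show ?thesis unfolding nu align_score_def fst_conv snd_conv
    using 1 2 3[of "Some (x (ia ! l0))" "Some (y (ja ! l0))" "Some (x (ia ! l0))" "Some ((y(i:=a)) (ja ! l0))"]
      3[of None "Some (y i)" None "Some ((y(i:=a)) i)"] by linarith
qed

lemma opt_score_upd_x:
  fixes R :: "'a::finite score"
  shows "\<bar>opt_score R n x y - opt_score R n (x(i:=a)) y\<bar> \<le> 4 * Kb R"
  unfolding opt_score_def
  by (rule Max_image_diff_le) (auto simp: finite_alignments alignments_ne align_score_upd_x)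

lemma opt_score_upd_y:
  fixes R :: "'a::finite score"
  shows "\<bar>opt_score R n x y - opt_score R n x (y(i:=a))\<bar> \<le> 4 * Kb R"
  unfolding opt_score_def
  by (rule Max_image_diff_le) (auto simp: finite_alignments alignments_ne align_score_upd_y)

lemma concat_alignments:
  assumes "(ia1, ja1) \<in> alignments m" "(ia2, ja2) \<in> alignments n"
  shows "(ia1 @ map (\<lambda>i. i + m) ia2, ja1 @ map (\<lambda>j. j + m) ja2) \<in> alignments (m + n)"
proof -
  note D1 = alignmentsD[OF assms(1)] and D2 = alignmentsD[OF assms(2)]
  have "sorted_wrt (<) (ia1 @ map (\<lambda>i. i + m) ia2)"
    unfolding sorted_wrt_append sorted_wrt_map using D1 D2 by fastforce
  moreover have "sorted_wrt (<) (ja1 @ map (\<lambda>i. i + m) ja2)"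
    unfolding sorted_wrt_append sorted_wrt_map using D1 D2 by fastforce
  ultimately show ?thesis using D1 D2 unfolding alignments_def by fastforce
qed

lemma superadd_align:
  assumes "(ia1, ja1) \<in> alignments m" "(ia2, ja2) \<in> alignments n"
  shows "align_score R (m + n) (ia1 @ map (\<lambda>i. i + m) ia2, ja1 @ map (\<lambda>j. j + m) ja2) x y
       = align_score R m (ia1, ja1) x y + align_score R n (ia2, ja2) (\<lambda>i. x (i + m)) (\<lambda>i. y (i + m))"
proof -
  note D1 = alignmentsD[OF assms(1)] and D2 = alignmentsD[OF assms(2)]
  have A: "(\<Sum>l<length (ia1 @ map (\<lambda>i. i + m) ia2).
            R (Some (x ((ia1 @ map (\<lambda>i. i + m) ia2) ! l))) (Some (y ((ja1 @ map (\<lambda>j. j + m) ja2) ! l))))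
       = (\<Sum>l<length ia1. R (Some (x (ia1 ! l))) (Some (y (ja1 ! l))))
         + (\<Sum>l<length ia2. R (Some (x (ia2 ! l + m))) (Some (y (ja2 ! l + m))))"
    using D1(1) D2(1) by (simp add: sum_lessThan_add_split nth_append)
  have gx: "{1..m+n} - set (ia1 @ map (\<lambda>i. i + m) ia2) = ({1..m} - set ia1) \<union> (\<lambda>i. i + m) ` ({1..n} - set ia2)"
  proof (intro equalityI subsetI)
    fix k assume k: "k \<in> {1..m+n} - set (ia1 @ map (\<lambda>i. i + m) ia2)"
    show "k \<in> ({1..m} - set ia1) \<union> (\<lambda>i. i + m) ` ({1..n} - set ia2)"
    proof (cases "k \<le> m")
      case True then show ?thesis using k by auto
    next
      case False
      then have "k = (k - m) + m" by simp
      moreover have "k - m \<in> {1..n} - set ia2" using k False by force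
      ultimately show ?thesis by blast
    qed
  next
    fix k assume "k \<in> ({1..m} - set ia1) \<union> (\<lambda>i. i + m) ` ({1..n} - set ia2)"
    then show "k \<in> {1..m+n} - set (ia1 @ map (\<lambda>i. i + m) ia2)" using D1(4) D2(4) by fastforce
  qed
  have gy: "{1..m+n} - set (ja1 @ map (\<lambda>i. i + m) ja2) = ({1..m} - set ja1) \<union> (\<lambda>i. i + m) ` ({1..n} - set ja2)"
  proof (intro equalityI subsetI)
    fix k assume k: "k \<in> {1..m+n} - set (ja1 @ map (\<lambda>i. i + m) ja2)"
    show "k \<in> ({1..m} - set ja1) \<union> (\<lambda>i. i + m) ` ({1..n} - set ja2)"
    proof (cases "k \<le> m")
      case True then show ?thesis using k by auto
    next
      case False
      then have "k = (k - m) + m" by simp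
      moreover have "k - m \<in> {1..n} - set ja2" using k False by force
      ultimately show ?thesis by blast
    qed
  next
    fix k assume "k \<in> ({1..m} - set ja1) \<union> (\<lambda>i. i + m) ` ({1..n} - set ja2)"
    then show "k \<in> {1..m+n} - set (ja1 @ map (\<lambda>i. i + m) ja2)" using D1(5) D2(5) by fastforce
  qed
  have disj: "({1..m} - set ia1) \<inter> (\<lambda>i. i + m) ` ({1..n} - set ia2) = {}"
             "({1..m} - set ja1) \<inter> (\<lambda>i. i + m) ` ({1..n} - set ja2) = {}" by auto
  have B: "(\<Sum>i\<in>{1..m+n} - set (ia1 @ map (\<lambda>i. i + m) ia2). R (Some (x i)) None)
      = (\<Sum>i\<in>{1..m} - set ia1. R (Some (x i)) None) + (\<Sum>i\<in>{1..n} - set ia2. R (Some (x (i + m))) None)"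
    unfolding gx by (subst sum.union_disjoint) (use disj in \<open>auto simp: sum.reindex\<close>)
  have C: "(\<Sum>i\<in>{1..m+n} - set (ja1 @ map (\<lambda>i. i + m) ja2). R None (Some (y i)))
      = (\<Sum>i\<in>{1..m} - set ja1. R None (Some (y i))) + (\<Sum>i\<in>{1..n} - set ja2. R None (Some (y (i + m))))"
    unfolding gy by (subst sum.union_disjoint) (use disj in \<open>auto simp: sum.reindex\<close>)
  show ?thesis unfolding align_score_def fst_conv snd_conv A B C by simp
qed

lemma opt_score_superadd:
  "opt_score R m x y + opt_score R n (\<lambda>i. x (i + m)) (\<lambda>i. y (i + m)) \<le> opt_score R (m + n) x y"
proof -
  obtain \<nu>1 where n1: "\<nu>1 \<in> alignments m" "align_score R m \<nu>1 x y = opt_score R m x y"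
    using opt_score_attained by blast
  obtain \<nu>2 where n2: "\<nu>2 \<in> alignments n"
      "align_score R n \<nu>2 (\<lambda>i. x (i + m)) (\<lambda>i. y (i + m)) = opt_score R n (\<lambda>i. x (i + m)) (\<lambda>i. y (i + m))"
    using opt_score_attained by blast
  obtain ia1 ja1 where 1: "\<nu>1 = (ia1, ja1)" by (cases \<nu>1)
  obtain ia2 ja2 where 2: "\<nu>2 = (ia2, ja2)" by (cases \<nu>2)
  show ?thesis
    using superadd_align[of ia1 ja1 m ia2 ja2 n R x y] concat_alignments[of ia1 ja1 m ia2 ja2 n]
      opt_score_ge[of _ "m+n" R x y] n1 n2 unfolding 1 2 by force
qed

lemma finite_set_Pi_pmf:
  fixes q :: "'a::finite pmf"
  assumes "finite A"
  shows "finite (set_pmf (Pi_pmf A d (\<lambda>_. q)))"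
proof -
  have "set_pmf (Pi_pmf A d (\<lambda>_. q)) \<subseteq> PiE_dflt A d (\<lambda>_. UNIV)"
    using set_Pi_pmf_subset'[OF assms, of d "\<lambda>_. q"] by (auto simp: PiE_dflt_def)
  moreover have "finite (PiE_dflt A d (\<lambda>_. (UNIV :: 'a set)))" using assms by auto
  ultimately show ?thesis by (rule finite_subset)
qed

lemma expectation_pair_pmf_fin1:
  fixes f :: "'a \<times> 'b \<Rightarrow> real"
  assumes "finite (set_pmf A)" "finite (set_pmf B)"
  shows "measure_pmf.expectation (pair_pmf A B) f
       = measure_pmf.expectation A (\<lambda>a. measure_pmf.expectation B (\<lambda>b. f (a, b)))"
proof -
  have "measure_pmf.expectation (pair_pmf A B) f = (\<Sum>z\<in>set_pmf A \<times> set_pmf B. f z * pmf (pair_pmf A B) z)"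
    using assms by (intro integral_measure_pmf_real) auto
  also have "\<dots> = (\<Sum>a\<in>set_pmf A. \<Sum>b\<in>set_pmf B. f (a,b) * (pmf A a * pmf B b))"
    unfolding sum.cartesian_product by (intro sum.cong) (auto simp: pmf_pair)
  also have "\<dots> = (\<Sum>a\<in>set_pmf A. (\<Sum>b\<in>set_pmf B. f (a,b) * pmf B b) * pmf A a)"
    by (simp add: sum_distrib_left sum_distrib_right mult_ac)
  also have "\<dots> = (\<Sum>a\<in>set_pmf A. measure_pmf.expectation B (\<lambda>b. f (a, b)) * pmf A a)"
    using assms by (intro sum.cong refl arg_cong2[where f="(*)"] integral_measure_pmf_real[symmetric]) auto
  also have "\<dots> = measure_pmf.expectation A (\<lambda>a. measure_pmf.expectation B (\<lambda>b. f (a, b)))"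
    using assms by (intro integral_measure_pmf_real[symmetric]) auto
  finally show ?thesis .
qed

lemma expectation_pair_pmf_fin2:
  fixes f :: "'a \<times> 'b \<Rightarrow> real"
  assumes "finite (set_pmf A)" "finite (set_pmf B)"
  shows "measure_pmf.expectation (pair_pmf A B) f
       = measure_pmf.expectation B (\<lambda>b. measure_pmf.expectation A (\<lambda>a. f (a, b)))"
proof -
  have "measure_pmf.expectation (pair_pmf A B) f = (\<Sum>z\<in>set_pmf A \<times> set_pmf B. f z * pmf (pair_pmf A B) z)"
    using assms by (intro integral_measure_pmf_real) auto
  also have "\<dots> = (\<Sum>a\<in>set_pmf A. \<Sum>b\<in>set_pmf B. f (a,b) * (pmf A a * pmf B b))"
    unfolding sum.cartesian_product by (intro sum.cong) (auto simp: pmf_pair)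
  also have "\<dots> = (\<Sum>b\<in>set_pmf B. \<Sum>a\<in>set_pmf A. f (a,b) * (pmf A a * pmf B b))"
    by (rule sum.swap)
  also have "\<dots> = (\<Sum>b\<in>set_pmf B. (\<Sum>a\<in>set_pmf A. f (a,b) * pmf A a) * pmf B b)"
    by (simp add: sum_distrib_left sum_distrib_right mult_ac)
  also have "\<dots> = (\<Sum>b\<in>set_pmf B. measure_pmf.expectation A (\<lambda>a. f (a, b)) * pmf B b)"
    using assms by (intro sum.cong refl arg_cong2[where f="(*)"] integral_measure_pmf_real[symmetric]) auto
  also have "\<dots> = measure_pmf.expectation B (\<lambda>b. measure_pmf.expectation A (\<lambda>a. f (a, b)))"
    using assms by (intro integral_measure_pmf_real[symmetric]) auto
  finally show ?thesis .
qed

lemma expectation_abs_le_fin: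
  fixes g :: "'a \<Rightarrow> real"
  assumes "finite (set_pmf q)" "\<And>y. \<bar>g y\<bar> \<le> c"
  shows "\<bar>measure_pmf.expectation q g\<bar> \<le> c"
proof -
  have h: "g y \<le> c" "- c \<le> g y" for y using assms(2)[of y] by linarith+
  have "measure_pmf.expectation q g \<le> measure_pmf.expectation q (\<lambda>_. c)"
    using assms h by (intro integral_mono integrable_measure_pmf_finite) auto
  moreover have "measure_pmf.expectation q (\<lambda>_. - c) \<le> measure_pmf.expectation q g"
    using assms h by (intro integral_mono integrable_measure_pmf_finite) auto
  ultimately show ?thesis by simp
qed

lemma hoeffding_pmf:
  fixes q :: "'a::finite pmf" and g :: "'a \<Rightarrow> real"
  assumes "\<And>y y'. \<bar>g y - g y'\<bar> \<le> c" "l > 0"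
  shows "measure_pmf.expectation q (\<lambda>y. exp (l * (g y - measure_pmf.expectation q g))) \<le> exp (l\<^sup>2 * c\<^sup>2 / 8)"
proof -
  define m where "m = Min (range g)"
  have "m \<in> range g" unfolding m_def by (intro Min_in) auto
  then obtain y0 where y0: "g y0 = m" by auto
  have gi: "g y \<in> {m..m+c}" for y
  proof -
    have "m \<le> g y" unfolding m_def by (intro Min_le) auto
    moreover have "g y \<le> m + c" using assms(1)[of y y0] y0 by linarith
    ultimately show ?thesis by simp
  qed
  have ib: "interval_bounded_random_variable (measure_pmf q) g m (m + c)"
    by unfold_locales (use gi in auto)
  let ?e = "measure_pmf.expectation q"
  have "nn_integral (measure_pmf q) (\<lambda>y. exp (l * (g y - ?e g))) \<le> ennreal (exp (l\<^sup>2 * (m + c - m)\<^sup>2 / 8))"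
    by (rule interval_bounded_random_variable.Hoeffdings_lemma_nn_integral[OF ib]) (use assms in auto)
  moreover have "nn_integral (measure_pmf q) (\<lambda>y. exp (l * (g y - ?e g)))
       = ennreal (?e (\<lambda>y. exp (l * (g y - ?e g))))"
    by (intro nn_integral_eq_integral integrable_measure_pmf_finite) auto
  ultimately show ?thesis by simp
qed

lemma mcdiarmid_mgf:
  fixes q :: "'a::finite pmf" and F :: "('k \<Rightarrow> 'a) \<Rightarrow> real"
  assumes "finite A" "\<And>f k a. k \<in> A \<Longrightarrow> \<bar>F f - F (f(k:=a))\<bar> \<le> c" "l > 0"
  shows "measure_pmf.expectation (Pi_pmf A d (\<lambda>_. q))
           (\<lambda>f. exp (l * (F f - measure_pmf.expectation (Pi_pmf A d (\<lambda>_. q)) F)))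
         \<le> exp (l\<^sup>2 * real (card A) * c\<^sup>2 / 8)"
  using assms(1,2)
proof (induction A arbitrary: F rule: finite_induct)
  case empty
  then show ?case by simp
next
  case (insert x A)
  let ?P = "Pi_pmf A d (\<lambda>_. q)"
  let ?E = "measure_pmf.expectation"
  have finA: "finite (set_pmf ?P)" by (rule finite_set_Pi_pmf) fact
  have finq: "finite (set_pmf q)" by simp
  have eqP: "Pi_pmf (insert x A) d (\<lambda>_. q) = map_pmf (\<lambda>(y,f). f(x:=y)) (pair_pmf q ?P)"
    using insert by (intro Pi_pmf_insert) auto
  define G where "G f = ?E q (\<lambda>y. F (f(x:=y)))" for f
  have EF: "?E (Pi_pmf (insert x A) d (\<lambda>_. q)) F = ?E ?P G"
    unfolding eqP integral_map_pmf G_def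
    by (subst expectation_pair_pmf_fin2[OF finq finA]) simp
  define \<mu> where "\<mu> = ?E ?P G"
  have Gdiff: "\<bar>G f - G (f(k:=a))\<bar> \<le> c" if "k \<in> A" for f k a
  proof -
    have "G f - G (f(k:=a)) = ?E q (\<lambda>y. F (f(x:=y)) - F ((f(x:=y))(k:=a)))"
    proof -
      have "k \<noteq> x" using that insert by auto
      then have "(f(k:=a))(x:=y) = (f(x:=y))(k:=a)" for y by (auto simp: fun_eq_iff)
      then show ?thesis unfolding G_def
        by (subst Bochner_Integration.integral_diff) (auto intro!: integrable_measure_pmf_finite)
    qed
    also have "\<bar>\<dots>\<bar> \<le> c"
    proof -
      have "\<And>y. \<bar>F (f(x:=y)) - F ((f(x:=y))(k:=a))\<bar> \<le> c" using insert.prems that by blast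
      then show ?thesis by (rule expectation_abs_le_fin[rotated]) simp
    qed
    finally show ?thesis .
  qed
  have IH: "?E ?P (\<lambda>f. exp (l * (G f - \<mu>))) \<le> exp (l\<^sup>2 * real (card A) * c\<^sup>2 / 8)"
    unfolding \<mu>_def by (rule insert.IH[OF Gdiff])
  have inner: "?E q (\<lambda>y. exp (l * (F (f(x:=y)) - G f))) \<le> exp (l\<^sup>2 * c\<^sup>2 / 8)" for f
  proof -
    have "\<bar>F (f(x:=y)) - F (f(x:=y'))\<bar> \<le> c" for y y'
      using insert.prems[of x "f(x:=y)" y'] by (simp del: fun_upd_apply)
    then show ?thesis unfolding G_def by (intro hoeffding_pmf) (use assms(3) in auto)
  qed
  have "?E (Pi_pmf (insert x A) d (\<lambda>_. q)) (\<lambda>f. exp (l * (F f - ?E (Pi_pmf (insert x A) d (\<lambda>_. q)) F)))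
      = ?E ?P (\<lambda>f. ?E q (\<lambda>y. exp (l * (F (f(x:=y)) - \<mu>))))"
    unfolding EF \<mu>_def[symmetric] unfolding eqP integral_map_pmf
    by (subst expectation_pair_pmf_fin2[OF finq finA]) simp
  also have "\<dots> = ?E ?P (\<lambda>f. exp (l * (G f - \<mu>)) * ?E q (\<lambda>y. exp (l * (F (f(x:=y)) - G f))))"
  proof (intro Bochner_Integration.integral_cong refl)
    fix f
    have "exp (l * (F (f(x:=y)) - \<mu>)) = exp (l * (G f - \<mu>)) * exp (l * (F (f(x:=y)) - G f))" for y
      by (simp add: exp_add[symmetric] algebra_simps)
    then show "?E q (\<lambda>y. exp (l * (F (f(x:=y)) - \<mu>))) = exp (l * (G f - \<mu>)) * ?E q (\<lambda>y. exp (l * (F (f(x:=y)) - G f)))"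
      by simp
  qed
  also have "\<dots> \<le> ?E ?P (\<lambda>f. exp (l * (G f - \<mu>)) * exp (l\<^sup>2 * c\<^sup>2 / 8))"
    by (intro integral_mono integrable_measure_pmf_finite finA mult_left_mono inner) auto
  also have "\<dots> = ?E ?P (\<lambda>f. exp (l * (G f - \<mu>))) * exp (l\<^sup>2 * c\<^sup>2 / 8)" by simp
  also have "\<dots> \<le> exp (l\<^sup>2 * real (card A) * c\<^sup>2 / 8) * exp (l\<^sup>2 * c\<^sup>2 / 8)"
    by (intro mult_right_mono IH) auto
  also have "\<dots> = exp (l\<^sup>2 * real (card (insert x A)) * c\<^sup>2 / 8)"
    using insert by (simp add: exp_add[symmetric] algebra_simps add_divide_distrib)
  finally show ?case .
qed

lemma mcdiarmid_upper:
  fixes q :: "'a::finite pmf" and F :: "('k \<Rightarrow> 'a) \<Rightarrow> real"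
  assumes "finite A" "\<And>f k a. k \<in> A \<Longrightarrow> \<bar>F f - F (f(k:=a))\<bar> \<le> c" "t > 0" "c > 0" "A \<noteq> {}"
  shows "measure_pmf.prob (Pi_pmf A d (\<lambda>_. q)) {f. F f - measure_pmf.expectation (Pi_pmf A d (\<lambda>_. q)) F \<ge> t}
         \<le> exp (- 2 * t\<^sup>2 / (real (card A) * c\<^sup>2))"
proof -
  let ?P = "Pi_pmf A d (\<lambda>_. q)"
  let ?E = "measure_pmf.expectation"
  define N where "N = real (card A)"
  have N: "N > 0" using assms by (simp add: N_def card_gt_0_iff)
  define l where "l = 4 * t / (N * c\<^sup>2)"
  have l: "l > 0" using N assms by (simp add: l_def)
  have fin: "finite (set_pmf ?P)" by (rule finite_set_Pi_pmf) fact
  have "measure_pmf.prob ?P {f. F f - ?E ?P F \<ge> t} = ?E ?P (indicator {f. F f - ?E ?P F \<ge> t})"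
    by simp
  also have "\<dots> \<le> ?E ?P (\<lambda>f. exp (l * (F f - ?E ?P F)) * exp (- l * t))"
  proof (intro integral_mono integrable_measure_pmf_finite fin)
    fix f
    show "indicator {f. F f - ?E ?P F \<ge> t} f \<le> exp (l * (F f - ?E ?P F)) * exp (- l * t)"
    proof (cases "F f - ?E ?P F \<ge> t")
      case True
      then have "l * t \<le> l * (F f - ?E ?P F)" using l by (intro mult_left_mono) auto
      then have "1 \<le> exp (l * (F f - ?E ?P F) + - l * t)" by simp
      then show ?thesis using True by (simp add: mult_exp_exp)
    qed simp
  qed
  also have "\<dots> = ?E ?P (\<lambda>f. exp (l * (F f - ?E ?P F))) * exp (- l * t)" by simp
  also have "\<dots> \<le> exp (l\<^sup>2 * N * c\<^sup>2 / 8) * exp (- l * t)"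
    unfolding N_def by (intro mult_right_mono mcdiarmid_mgf assms l) auto
  also have "\<dots> = exp (- 2 * t\<^sup>2 / (N * c\<^sup>2))"
    using N assms unfolding exp_add[symmetric] l_def by (simp add: field_simps power2_eq_square)
  finally show ?thesis unfolding N_def .
qed

lemma mcdiarmid_abs:
  fixes q :: "'a::finite pmf" and F :: "('k \<Rightarrow> 'a) \<Rightarrow> real"
  assumes "finite A" "\<And>f k a. k \<in> A \<Longrightarrow> \<bar>F f - F (f(k:=a))\<bar> \<le> c" "t > 0" "c > 0" "A \<noteq> {}"
  shows "measure_pmf.prob (Pi_pmf A d (\<lambda>_. q)) {f. \<bar>F f - measure_pmf.expectation (Pi_pmf A d (\<lambda>_. q)) F\<bar> \<ge> t}
         \<le> 2 * exp (- 2 * t\<^sup>2 / (real (card A) * c\<^sup>2))"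
proof -
  let ?P = "Pi_pmf A d (\<lambda>_. q)"
  let ?E = "measure_pmf.expectation"
  have fin: "finite (set_pmf ?P)" by (rule finite_set_Pi_pmf) fact
  have negE: "?E ?P (\<lambda>f. - F f) = - ?E ?P F" by simp
  have "{f. \<bar>F f - ?E ?P F\<bar> \<ge> t} = {f. F f - ?E ?P F \<ge> t} \<union> {f. - F f - ?E ?P (\<lambda>f. - F f) \<ge> t}"
    unfolding negE by auto
  then have "measure_pmf.prob ?P {f. \<bar>F f - ?E ?P F\<bar> \<ge> t}
     \<le> measure_pmf.prob ?P {f. F f - ?E ?P F \<ge> t} + measure_pmf.prob ?P {f. - F f - ?E ?P (\<lambda>f. - F f) \<ge> t}"
    by (simp add: measure_Un_le)
  also have "\<dots> \<le> exp (- 2 * t\<^sup>2 / (real (card A) * c\<^sup>2)) + exp (- 2 * t\<^sup>2 / (real (card A) * c\<^sup>2))"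
    by (intro add_mono mcdiarmid_upper assms) (use assms(2) in \<open>auto simp: abs_minus_commute\<close>)
  finally show ?thesis by simp
qed

lemma sets_PiM_finite_all:
  fixes S :: "('k \<Rightarrow> 'a::finite) set"
  assumes "finite J" "S \<subseteq> space (PiM J (\<lambda>_. count_space (UNIV :: 'a set)))"
  shows "S \<in> sets (PiM J (\<lambda>_. count_space (UNIV :: 'a set)))"
proof -
  have sp: "space (PiM J (\<lambda>_. count_space (UNIV :: 'a set))) = PiE J (\<lambda>_. UNIV)"
    by (simp add: space_PiM)
  have finS: "finite S"
    using assms(2) unfolding sp by (rule finite_subset) (intro finite_PiE assms(1); simp)
  have single: "PiE J (\<lambda>i. {f i}) = {f}" if "f \<in> S" for f
  proof -
    have "f \<in> PiE J (\<lambda>_. UNIV)" using that assms(2) sp by auto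
    then show ?thesis apply (auto simp: PiE_iff extensional_def fun_eq_iff) by metis
  qed
  have "S = (\<Union>f\<in>S. PiE J (\<lambda>i. {f i}))" using single by auto
  also have "\<dots> \<in> sets (PiM J (\<lambda>_. count_space (UNIV :: 'a set)))"
    by (intro sets.finite_UN finS sets_PiM_I_finite assms(1)) auto
  finally show ?thesis .
qed

definition Zv :: "(nat \<Rightarrow> 'w \<Rightarrow> 'a) \<Rightarrow> (nat \<Rightarrow> 'w \<Rightarrow> 'a) \<Rightarrow> 'w \<Rightarrow> nat + nat \<Rightarrow> 'a" where
  "Zv X Y \<omega> = (\<lambda>k. case k of Inl i \<Rightarrow> X i \<omega> | Inr j \<Rightarrow> Y j \<omega>)"

lemma transfer:
  fixes M :: "'w measure" and p :: "'a::finite pmf" and G :: "(nat + nat \<Rightarrow> 'a) \<Rightarrow> 'b"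
  assumes PS: "prob_space M" and iid: "iid_letters M p X Y"
    and J: "finite J" "J \<noteq> {}"
    and loc: "\<And>\<zeta> \<zeta>'. (\<And>k. k \<in> J \<Longrightarrow> \<zeta> k = \<zeta>' k) \<Longrightarrow> G \<zeta> = G \<zeta>'"
  shows "{\<omega>\<in>space M. G (Zv X Y \<omega>) \<in> B} \<in> sets M"
    "measure M {\<omega>\<in>space M. G (Zv X Y \<omega>) \<in> B} = measure_pmf.prob (Pi_pmf J d (\<lambda>_. p)) {\<zeta>. G \<zeta> \<in> B}"
proof -
  interpret prob_space M by (rule PS)
  define Z where "Z = (\<lambda>k. case k of Inl i \<Rightarrow> X i | Inr j \<Rightarrow> Y j)"
  have Zv: "Zv X Y \<omega> = (\<lambda>k. Z k \<omega>)" for \<omega> by (auto simp: Zv_def Z_def fun_eq_iff split: sum.splits)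
  have ind: "indep_vars (\<lambda>_. count_space UNIV) Z UNIV" using iid by (simp add: iid_letters_def Z_def)
  have rv: "random_variable (count_space UNIV) (Z k)" for k
    using ind by (auto simp: indep_vars_def)
  have dZ: "distr M (count_space UNIV) (Z k) = measure_pmf p" for k
    using iid by (cases k) (auto simp: iid_letters_def Z_def)
  let ?PM = "PiM J (\<lambda>_. count_space (UNIV :: 'a set))"
  let ?W = "Pi_pmf J d (\<lambda>_. p)"
  have indJ: "indep_vars (\<lambda>_. count_space UNIV) Z J" by (rule indep_vars_subset[OF ind]) auto
  have D1: "distr M ?PM (\<lambda>\<omega>. \<lambda>k\<in>J. Z k \<omega>) = PiM J (\<lambda>k. distr M (count_space UNIV) (Z k))"
    using indJ by (subst (asm) indep_vars_iff_distr_eq_PiM'[OF J(2) rv]) 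
  also have "\<dots> = PiM J (\<lambda>_. measure_pmf p)" by (simp add: dZ)
  finally have D1': "distr M ?PM (\<lambda>\<omega>. \<lambda>k\<in>J. Z k \<omega>) = PiM J (\<lambda>_. measure_pmf p)" .
  have rvW: "measure_pmf.random_variable ?W (count_space UNIV) (\<lambda>f. f k)" for k
    by (simp add: measurable_pmf_measure1)
  have indW: "prob_space.indep_vars (measure_pmf ?W) (\<lambda>_. count_space UNIV) (\<lambda>k f. f k) J"
    by (rule indep_vars_Pi_pmf[OF J(1)])
  have D2: "distr ?W ?PM (\<lambda>f. \<lambda>k\<in>J. f k) = PiM J (\<lambda>k. distr ?W (count_space UNIV) (\<lambda>f. f k))"
    using indW by (subst (asm) prob_space.indep_vars_iff_distr_eq_PiM'[OF measure_pmf.prob_space_axioms J(2) rvW])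
  also have "\<dots> = PiM J (\<lambda>_. measure_pmf p)"
  proof (intro PiM_cong refl)
    fix k assume "k \<in> J"
    then show "distr ?W (count_space UNIV) (\<lambda>f. f k) = measure_pmf p"
      using Pi_pmf_component[OF J(1), of k d "\<lambda>_. p"] map_pmf_rep_eq[of "\<lambda>f. f k" ?W]
      by simp
  qed
  finally have D2': "distr ?W ?PM (\<lambda>f. \<lambda>k\<in>J. f k) = PiM J (\<lambda>_. measure_pmf p)" .
  define S where "S = {\<zeta> \<in> space ?PM. G \<zeta> \<in> B}"
  have S: "S \<in> sets ?PM" unfolding S_def by (intro sets_PiM_finite_all J) auto
  have mZ: "(\<lambda>\<omega>. \<lambda>k\<in>J. Z k \<omega>) \<in> measurable M ?PM" by (intro measurable_restrict rv)
  have Grestr: "G (restrict \<zeta> J) = G \<zeta>" for \<zeta> by (rule loc) auto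
  have E1: "{\<omega>\<in>space M. G (Zv X Y \<omega>) \<in> B} = (\<lambda>\<omega>. \<lambda>k\<in>J. Z k \<omega>) -` S \<inter> space M"
  proof -
    have "G (\<lambda>k\<in>J. Z k \<omega>) = G (Zv X Y \<omega>)" for \<omega>
      using Grestr[of "Zv X Y \<omega>"] by (simp add: Zv restrict_def)
    moreover have "(\<lambda>k\<in>J. Z k \<omega>) \<in> space ?PM" for \<omega> by (simp add: space_PiM)
    ultimately show ?thesis unfolding S_def by auto
  qed
  show "{\<omega>\<in>space M. G (Zv X Y \<omega>) \<in> B} \<in> sets M"
    unfolding E1 using mZ S by (rule measurable_sets)
  have "measure M {\<omega>\<in>space M. G (Zv X Y \<omega>) \<in> B} = measure (distr M ?PM (\<lambda>\<omega>. \<lambda>k\<in>J. Z k \<omega>)) S"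
    unfolding E1 by (rule measure_distr[symmetric, OF mZ S])
  also have "\<dots> = measure (distr ?W ?PM (\<lambda>f. \<lambda>k\<in>J. f k)) S" unfolding D1' D2' ..
  also have "\<dots> = measure ?W ((\<lambda>f. \<lambda>k\<in>J. f k) -` S \<inter> space ?W)"
    by (rule measure_distr) (auto simp: S measurable_pmf_measure1 space_PiM)
  also have "(\<lambda>f. \<lambda>k\<in>J. f k) -` S \<inter> space ?W = {\<zeta>. G \<zeta> \<in> B}"
    unfolding S_def using Grestr by (auto simp: space_PiM restrict_def)
  finally show "measure M {\<omega>\<in>space M. G (Zv X Y \<omega>) \<in> B} = measure_pmf.prob ?W {\<zeta>. G \<zeta> \<in> B}" .
qed

lemma superadd_mult:
  fixes a :: "nat \<Rightarrow> real"
  assumes sa: "\<And>m n. a m + a n \<le> a (m + n)"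
  shows "real q * a k + a r \<le> a (q * k + r)"
proof (induction q)
  case 0 then show ?case by simp
next
  case (Suc q)
  have "real (Suc q) * a k + a r = a k + (real q * a k + a r)" by (simp add: algebra_simps)
  also have "\<dots> \<le> a k + a (q * k + r)" using Suc by simp
  also have "\<dots> \<le> a (k + (q * k + r))" by (rule sa)
  finally show ?case by (simp add: add.assoc)
qed

lemma fekete:
  fixes a :: "nat \<Rightarrow> real"
  assumes sa: "\<And>m n. a m + a n \<le> a (m + n)" and bd: "\<And>n. \<bar>a n\<bar> \<le> C * real n"
  shows "\<exists>c. (\<lambda>n. a n / real n) \<longlonglongrightarrow> c"
proof -
  define s where "s = (SUP n\<in>{1..}. a n / real n)"
  have C0: "C \<ge> 0" using bd[of 1] by simp
  have ub: "a n / real n \<le> C" for n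
  proof (cases "n = 0")
    case False
    then have "a n \<le> C * real n" using bd[of n] by linarith
    then show ?thesis using False by (simp add: divide_le_eq mult.commute)
  qed (simp add: C0)
  have bdd: "bdd_above ((\<lambda>n. a n / real n) ` {1..})" using ub by (intro bdd_aboveI[of _ C]) auto
  have le_s: "a n / real n \<le> s" if "n \<ge> 1" for n
    unfolding s_def using that bdd by (intro cSUP_upper) auto
  have "(\<lambda>n. a n / real n) \<longlonglongrightarrow> s"
  proof (rule LIMSEQ_I)
    fix r :: real assume r: "r > 0"
    have "s - r/2 < s" using r by simp
    then obtain k where k: "k \<ge> 1" "s - r/2 < a k / real k"
      unfolding s_def using bdd by (subst (asm) less_cSUP_iff) auto
    have kC: "\<bar>a k / real k\<bar> \<le> C" using bd[of k] k(1) by (simp add: divide_le_eq abs_divide mult.commute)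
    obtain N :: nat where N: "N > 4 * C * real k / r" using reals_Archimedean2 by blast
    show "\<exists>no. \<forall>n\<ge>no. norm (a n / real n - s) < r"
    proof (intro exI[of _ "max N 1"] allI impI)
      fix n assume n: "n \<ge> max N 1"
      then have n1: "n \<ge> 1" and nN: "real n \<ge> real N" by auto
      have npos: "real n > 0" using n1 by simp
      define q where "q = n div k"
      define rr where "rr = n mod k"
      have nqr: "n = q * k + rr" by (simp add: q_def rr_def)
      have rrk: "rr < k" using k(1) by (simp add: rr_def)
      have "real q * a k + a rr \<le> a n" using superadd_mult[OF sa, of q k rr] nqr by simp
      moreover have "a rr \<ge> - C * real k"
      proof -
        have "a rr \<ge> - (C * real rr)" using bd[of rr] by linarith
        moreover have "C * real rr \<le> C * real k" using rrk C0 by (intro mult_left_mono) auto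
        ultimately show ?thesis by linarith
      qed
      moreover have "real q * a k = real n * (a k / real k) - real rr * (a k / real k)"
        using k(1) nqr by (simp add: field_simps)
      moreover have "real rr * (a k / real k) \<le> C * real k"
      proof -
        have "a k / real k \<le> C" using kC by (rule abs_le_D1)
        then have "real rr * (a k / real k) \<le> real rr * C" by (intro mult_left_mono) auto
        also have "\<dots> \<le> real k * C" using rrk C0 by (intro mult_right_mono) auto
        finally show ?thesis by (simp add: mult.commute)
      qed
      ultimately have "a n \<ge> real n * (a k / real k) - 2 * C * real k" by linarith
      then have "(real n * (a k / real k) - 2 * C * real k) / real n \<le> a n / real n"
        using npos by (intro divide_right_mono) auto
      moreover have "(real n * (a k / real k) - 2 * C * real k) / real n = a k / real k - 2 * C * real k / real n"
        using npos by (simp add: diff_divide_distrib)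
      ultimately have "a n / real n \<ge> a k / real k - 2 * C * real k / real n" by simp
      moreover have "2 * C * real k / real n < r / 2"
      proof -
        have "4 * C * real k < r * real N" using N r by (simp add: field_simps)
        also have "\<dots> \<le> r * real n" using nN r by simp
        finally show ?thesis using npos by (simp add: field_simps)
      qed
      moreover have "a n / real n \<le> s" by (rule le_s[OF n1])
      ultimately show "norm (a n / real n - s) < r" using k(2) by simp
    qed
  qed
  then show ?thesis by blast
qed

definition Ix :: "nat \<Rightarrow> (nat + nat) set" where
  "Ix n = Inl ` {1..n} \<union> Inr ` {1..n}"

definition Fn :: "'a score \<Rightarrow> nat \<Rightarrow> (nat + nat \<Rightarrow> 'a) \<Rightarrow> real" where
  "Fn R n \<zeta> = opt_score R n (\<lambda>i. \<zeta> (Inl i)) (\<lambda>i. \<zeta> (Inr i))"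

definition Wn :: "'a pmf \<Rightarrow> nat \<Rightarrow> (nat + nat \<Rightarrow> 'a) pmf" where
  "Wn p n = Pi_pmf (Ix n) undefined (\<lambda>_. p)"

definition en :: "'a score \<Rightarrow> 'a pmf \<Rightarrow> nat \<Rightarrow> real" where
  "en R p n = measure_pmf.expectation (Wn p n) (Fn R n)"

lemma finite_Ix: "finite (Ix n)" by (simp add: Ix_def)

lemma card_Ix: "card (Ix n) = 2 * n"
proof -
  have "card (Ix n) = card (Inl ` {1..n} :: (nat + nat) set) + card (Inr ` {1..n} :: (nat + nat) set)"
    unfolding Ix_def by (rule card_Un_disjoint) auto
  also have "\<dots> = 2 * n" by (simp add: card_image)
  finally show ?thesis .
qed

lemma Fn_local:
  assumes "\<And>k. k \<in> Ix n \<Longrightarrow> \<zeta> k = \<zeta>' k"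
  shows "Fn R n \<zeta> = Fn R n \<zeta>'"
  unfolding Fn_def by (rule opt_score_local) (use assms in \<open>auto simp: Ix_def\<close>)

lemma Fn_bdiff:
  fixes R :: "'a::finite score"
  shows "\<bar>Fn R n \<zeta> - Fn R n (\<zeta>(k := a))\<bar> \<le> 4 * Kb R"
proof (cases k)
  case (Inl i)
  have "(\<lambda>j. (\<zeta>(k := a)) (Inl j)) = (\<lambda>j. \<zeta> (Inl j))(i := a)" "(\<lambda>j. (\<zeta>(k := a)) (Inr j)) = (\<lambda>j. \<zeta> (Inr j))"
    using Inl by (auto simp: fun_eq_iff)
  then show ?thesis unfolding Fn_def by (simp only: opt_score_upd_x)
next
  case (Inr i)
  have "(\<lambda>j. (\<zeta>(k := a)) (Inr j)) = (\<lambda>j. \<zeta> (Inr j))(i := a)" "(\<lambda>j. (\<zeta>(k := a)) (Inl j)) = (\<lambda>j. \<zeta> (Inl j))"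
    using Inr by (auto simp: fun_eq_iff)
  then show ?thesis unfolding Fn_def by (simp only: opt_score_upd_y)
qed

lemma finite_set_Wn: "finite (set_pmf (Wn (p :: 'a::finite pmf) n))"
  unfolding Wn_def by (rule finite_set_Pi_pmf) (rule finite_Ix)

lemma en_bound:
  fixes R :: "'a::finite score"
  shows "\<bar>en R p n\<bar> \<le> 3 * Kb R * real n"
  unfolding en_def using opt_score_bound
  by (intro expectation_abs_le_fin finite_set_Wn) (auto simp: Fn_def mult_ac)

definition shn :: "nat \<Rightarrow> nat + nat \<Rightarrow> nat + nat" where
  "shn m = map_sum (\<lambda>i. i + m) (\<lambda>i. i + m)"

lemma en_superadd:
  fixes R :: "'a::finite score" and p :: "'a pmf"
  shows "en R p m + en R p n \<le> en R p (m + n)"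
proof -
  let ?E = "measure_pmf.expectation"
  let ?d = "undefined :: 'a"
  have fin: "finite (set_pmf (Wn p (m+n)))" by (rule finite_set_Wn)
  have sub1: "Ix m \<subseteq> Ix (m + n)" by (auto simp: Ix_def)
  have a: "en R p m = ?E (Wn p (m+n)) (Fn R m)"
  proof -
    have "Wn p m = map_pmf (\<lambda>f x. if x \<in> Ix m then f x else ?d) (Wn p (m+n))"
      unfolding Wn_def by (rule Pi_pmf_subset[OF finite_Ix sub1])
    then have "en R p m = ?E (Wn p (m+n)) (\<lambda>f. Fn R m (\<lambda>x. if x \<in> Ix m then f x else ?d))"
      by (simp add: en_def)
    also have "\<dots> = ?E (Wn p (m+n)) (Fn R m)"
      by (intro Bochner_Integration.integral_cong refl Fn_local) auto
    finally show ?thesis .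
  qed
  define J where "J = shn m ` Ix n"
  have sub2: "J \<subseteq> Ix (m + n)" by (auto simp: J_def Ix_def shn_def)
  have injsh: "inj (shn m)"
  proof (rule injI)
    fix x y assume "shn m x = shn m y" then show "x = y" by (cases x; cases y) (auto simp: shn_def)
  qed
  have b: "en R p n = ?E (Wn p (m+n)) (\<lambda>f. Fn R n (f \<circ> shn m))"
  proof -
    have "Wn p n = map_pmf (\<lambda>g. g \<circ> shn m) (Pi_pmf J ?d (\<lambda>_. p))"
      unfolding Wn_def J_def
    proof (rule Pi_pmf_bij_betw[OF finite_Ix])
      show "bij_betw (shn m) (Ix n) (shn m ` Ix n)" by (rule bij_betw_imageI) (use injsh in \<open>rule inj_on_subset\<close>, auto)
      show "\<And>x. x \<notin> Ix n \<Longrightarrow> shn m x \<notin> shn m ` Ix n" using injsh by (simp add: inj_image_mem_iff)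
    qed
    also have "Pi_pmf J ?d (\<lambda>_. p) = map_pmf (\<lambda>f x. if x \<in> J then f x else ?d) (Wn p (m+n))"
      unfolding Wn_def by (rule Pi_pmf_subset[OF finite_Ix sub2])
    finally have "en R p n = ?E (Wn p (m+n)) (\<lambda>f. Fn R n ((\<lambda>x. if x \<in> J then f x else ?d) \<circ> shn m))"
      by (simp add: en_def pmf.map_comp o_def)
    also have "\<dots> = ?E (Wn p (m+n)) (\<lambda>f. Fn R n (f \<circ> shn m))"
      by (intro Bochner_Integration.integral_cong refl Fn_local) (simp add: J_def)
    finally show ?thesis .
  qed
  have pt: "Fn R m f + Fn R n (f \<circ> shn m) \<le> Fn R (m + n) f" for f
  proof -
    have "(\<lambda>i. (f \<circ> shn m) (Inl i)) = (\<lambda>i. (\<lambda>i. f (Inl i)) (i + m))"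
         "(\<lambda>i. (f \<circ> shn m) (Inr i)) = (\<lambda>i. (\<lambda>i. f (Inr i)) (i + m))" by (auto simp: shn_def)
    then show ?thesis unfolding Fn_def using opt_score_superadd[of R m "\<lambda>i. f (Inl i)" "\<lambda>i. f (Inr i)" n]
      by (simp only:)
  qed
  have "en R p m + en R p n = ?E (Wn p (m+n)) (\<lambda>f. Fn R m f + Fn R n (f \<circ> shn m))"
    unfolding a b by (rule Bochner_Integration.integral_add[symmetric]) (auto intro: integrable_measure_pmf_finite fin)
  also have "\<dots> \<le> en R p (m + n)"
    unfolding en_def by (intro integral_mono integrable_measure_pmf_finite fin pt)
  finally show ?thesis .
qed

lemma Ix_ne: "n \<ge> 1 \<Longrightarrow> Ix n \<noteq> {}" by (auto simp: Ix_def)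

lemma opt_score_Fn: "opt_score R n (\<lambda>i. X i \<omega>) (\<lambda>i. Y i \<omega>) = Fn R n (Zv X Y \<omega>)"
  by (simp add: Fn_def Zv_def)

lemma conc_event:
  fixes M :: "'w measure" and p :: "'a::finite pmf" and R :: "'a score"
  assumes PS: "prob_space M" and iid: "iid_letters M p X Y" and \<delta>: "\<delta> > 0" and n1: "n \<ge> 1"
  defines "cc \<equiv> 4 * Kb R + 1"
  shows "{\<omega>\<in>space M. Fn R n (Zv X Y \<omega>) \<in> {v. \<delta> * real n \<le> \<bar>v - en R p n\<bar>}} \<in> sets M"
    "measure M {\<omega>\<in>space M. Fn R n (Zv X Y \<omega>) \<in> {v. \<delta> * real n \<le> \<bar>v - en R p n\<bar>}}
       \<le> 2 * exp (- (\<delta>\<^sup>2 / cc\<^sup>2)) ^ n"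
proof -
  have cc: "cc > 0" using Kb_nonneg[of R] by (simp add: cc_def)
  show "{\<omega>\<in>space M. Fn R n (Zv X Y \<omega>) \<in> {v. \<delta> * real n \<le> \<bar>v - en R p n\<bar>}} \<in> sets M"
    by (rule transfer(1)[where G="Fn R n", OF PS iid finite_Ix Ix_ne[OF n1] Fn_local])
  have "measure M {\<omega>\<in>space M. Fn R n (Zv X Y \<omega>) \<in> {v. \<delta> * real n \<le> \<bar>v - en R p n\<bar>}}
      = measure_pmf.prob (Pi_pmf (Ix n) undefined (\<lambda>_. p)) {\<zeta>. Fn R n \<zeta> \<in> {v. \<delta> * real n \<le> \<bar>v - en R p n\<bar>}}"
    by (rule transfer(2)[where G="Fn R n", OF PS iid finite_Ix Ix_ne[OF n1] Fn_local])
  also have "{\<zeta>. Fn R n \<zeta> \<in> {v. \<delta> * real n \<le> \<bar>v - en R p n\<bar>}} =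
      {\<zeta>. \<bar>Fn R n \<zeta> - measure_pmf.expectation (Pi_pmf (Ix n) undefined (\<lambda>_. p)) (Fn R n)\<bar> \<ge> \<delta> * real n}"
    by (simp add: en_def Wn_def)
  also have "measure_pmf.prob (Pi_pmf (Ix n) undefined (\<lambda>_. p)) \<dots>
       \<le> 2 * exp (- 2 * (\<delta> * real n)\<^sup>2 / (real (card (Ix n)) * cc\<^sup>2))"
  proof (rule mcdiarmid_abs[OF finite_Ix])
    show "\<bar>Fn R n f - Fn R n (f(k := a))\<bar> \<le> cc" for f k a
      using Fn_bdiff[of R n f k a] by (simp add: cc_def)
    show "0 < \<delta> * real n" using \<delta> n1 by simp
    show "cc > 0" by (rule cc)
    show "Ix n \<noteq> {}" by (rule Ix_ne[OF n1])
  qed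
  also have "- 2 * (\<delta> * real n)\<^sup>2 / (real (card (Ix n)) * cc\<^sup>2) = real n * (- (\<delta>\<^sup>2 / cc\<^sup>2))"
  proof -
    have "real (card (Ix n)) = 2 * real n" by (simp add: card_Ix)
    moreover have "- 2 * (\<delta> * real n)\<^sup>2 / ((2 * real n) * cc\<^sup>2) = real n * (- (\<delta>\<^sup>2 / cc\<^sup>2))"
      using n1 cc by (simp add: power2_eq_square)
    ultimately show ?thesis by simp
  qed
  also have "exp (real n * (- (\<delta>\<^sup>2 / cc\<^sup>2))) = exp (- (\<delta>\<^sup>2 / cc\<^sup>2)) ^ n"
    by (rule exp_of_nat_mult)
  finally show "measure M {\<omega>\<in>space M. Fn R n (Zv X Y \<omega>) \<in> {v. \<delta> * real n \<le> \<bar>v - en R p n\<bar>}}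
       \<le> 2 * exp (- (\<delta>\<^sup>2 / cc\<^sup>2)) ^ n" .
qed

lemma concentration_AE:
  fixes M :: "'w measure" and p :: "'a::finite pmf" and R :: "'a score"
  assumes PS: "prob_space M" and iid: "iid_letters M p X Y" and \<delta>: "\<delta> > 0"
  shows "AE \<omega> in M. eventually (\<lambda>n. \<bar>Fn R n (Zv X Y \<omega>) - en R p n\<bar> < \<delta> * real n) sequentially"
proof -
  interpret prob_space M by (rule PS)
  define cc where "cc = 4 * Kb R + 1"
  have cc: "cc > 0" using Kb_nonneg[of R] by (simp add: cc_def)
  define A where "A n = (if n = 0 then {} else
      {\<omega>\<in>space M. Fn R n (Zv X Y \<omega>) \<in> {v. \<delta> * real n \<le> \<bar>v - en R p n\<bar>}})" for n
  have Asets: "A n \<in> sets M" for n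
    using conc_event(1)[OF PS iid \<delta>, of n R] by (cases "n = 0") (simp_all add: A_def)
  define r where "r = exp (- (\<delta>\<^sup>2 / cc\<^sup>2))"
  have r: "r \<ge> 0" "r < 1" using \<delta> cc by (auto simp: r_def)
  have Ameas: "measure M (A n) \<le> 2 * r ^ n" for n
    using conc_event(2)[OF PS iid \<delta>, of n R] r(1) unfolding r_def cc_def
    by (cases "n = 0") (simp_all add: A_def)
  have summ: "summable (\<lambda>n. measure M (A n))"
  proof (rule summable_comparison_test)
    show "\<exists>N. \<forall>n\<ge>N. norm (measure M (A n)) \<le> 2 * r ^ n"
    proof (intro exI[of _ 0] allI impI)
      fix n :: nat
      show "norm (measure M (A n)) \<le> 2 * r ^ n" using Ameas[of n] by (simp add: measure_nonneg)
    qed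
    have "norm r < 1" using r by simp
    then show "summable (\<lambda>n. 2 * r ^ n)" by (intro summable_mult summable_geometric)
  qed
  have "AE \<omega> in M. eventually (\<lambda>n. \<omega> \<in> space M - A n) sequentially"
  proof -
    have fin: "emeasure M (A n) < \<infinity>" for n using emeasure_finite[of "A n"] by (simp add: less_top[symmetric])
    show ?thesis by (rule borel_cantelli_AE1[OF Asets fin summ])
  qed
  then show ?thesis
  proof (rule AE_mp[OF _ AE_I2], intro impI)
    fix \<omega> assume \<omega>: "\<omega> \<in> space M" and ev: "eventually (\<lambda>n. \<omega> \<in> space M - A n) sequentially"
    have "eventually (\<lambda>n. n \<ge> 1) sequentially" by (rule eventually_ge_at_top)
    with ev show "eventually (\<lambda>n. \<bar>Fn R n (Zv X Y \<omega>) - en R p n\<bar> < \<delta> * real n) sequentially"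
    proof eventually_elim
      case (elim n)
      then have "\<not> (\<delta> * real n \<le> \<bar>Fn R n (Zv X Y \<omega>) - en R p n\<bar>)" using \<omega> by (simp add: A_def)
      then show ?case by simp
    qed
  qed
qed

theorem as_limit:
  fixes M :: "'w measure" and p :: "'a::finite pmf" and R :: "'a score"
  assumes PS: "prob_space M" and iid: "iid_letters M p X Y"
  shows "\<exists>c. AE \<omega> in M. (\<lambda>n. opt_score R n (\<lambda>i. X i \<omega>) (\<lambda>i. Y i \<omega>) / real n) \<longlonglongrightarrow> c"
proof -
  obtain c where c: "(\<lambda>n. en R p n / real n) \<longlonglongrightarrow> c"
    using fekete[of "en R p" "3 * Kb R"] en_superadd en_bound by blast
  have "AE \<omega> in M. \<forall>j::nat. eventually (\<lambda>n. \<bar>Fn R n (Zv X Y \<omega>) - en R p n\<bar> < (1 / real (Suc j)) * real n) sequentially"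
    unfolding AE_all_countable by (intro allI concentration_AE[OF PS iid]) auto
  then have "AE \<omega> in M. (\<lambda>n. opt_score R n (\<lambda>i. X i \<omega>) (\<lambda>i. Y i \<omega>) / real n) \<longlonglongrightarrow> c"
  proof (rule AE_mp[OF _ AE_I2], intro impI)
    fix \<omega> assume H: "\<forall>j::nat. eventually (\<lambda>n. \<bar>Fn R n (Zv X Y \<omega>) - en R p n\<bar> < (1 / real (Suc j)) * real n) sequentially"
    have "(\<lambda>n. (Fn R n (Zv X Y \<omega>) - en R p n) / real n) \<longlonglongrightarrow> 0"
    proof (rule tendstoI)
      fix e :: real assume e: "e > 0"
      obtain j where j: "1 / real (Suc j) < e" using reals_Archimedean[OF e] by (auto simp: inverse_eq_divide)
      have "eventually (\<lambda>n. n \<ge> 1) sequentially" by (rule eventually_ge_at_top)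
      with H[rule_format, of j] show "eventually (\<lambda>n. dist ((Fn R n (Zv X Y \<omega>) - en R p n) / real n) 0 < e) sequentially"
      proof eventually_elim
        case (elim n)
        have np: "real n > 0" using elim by simp
        let ?d = "Fn R n (Zv X Y \<omega>) - en R p n"
        have "\<bar>?d / real n\<bar> = \<bar>?d\<bar> / real n" using np by simp
        also have "\<dots> < 1 / real (Suc j)"
          using elim(1) by (subst pos_divide_less_eq[OF np])
        finally show ?case using j by (simp add: dist_real_def)
      qed
    qed
    from tendsto_add[OF this c]
    show "(\<lambda>n. opt_score R n (\<lambda>i. X i \<omega>) (\<lambda>i. Y i \<omega>) / real n) \<longlonglongrightarrow> c"
      by (simp add: opt_score_Fn diff_divide_distrib)
  qed
  then show ?thesis by blast
qed

lemma AE_ex: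
  assumes "prob_space M" "AE \<omega> in M. P \<omega>"
  shows "\<exists>\<omega>. P \<omega>"
proof -
  interpret prob_space M by fact
  obtain S where "S \<subseteq> {x \<in> space M. P x}" "measure M S = 1"
    using AE_E_prob[OF assms(2)] by blast
  note S = this
  have "S \<noteq> {}" using S(2) by auto
  then obtain \<omega> where "\<omega> \<in> S" by blast
  then show ?thesis using S(1) by blast
qed

theorem lam_limit:
  fixes M :: "'w measure" and p :: "'a::finite pmf" and R :: "'a score"
  assumes PS: "prob_space M" and iid: "iid_letters M p X Y"
  shows "AE \<omega> in M. (\<lambda>n. opt_score R n (\<lambda>i. X i \<omega>) (\<lambda>i. Y i \<omega>) / real n) \<longlonglongrightarrow> lam M X Y R"
proof -
  let ?P = "\<lambda>c. AE \<omega> in M. (\<lambda>n. opt_score R n (\<lambda>i. X i \<omega>) (\<lambda>i. Y i \<omega>) / real n) \<longlonglongrightarrow> c"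
  have "\<exists>!c. ?P c"
  proof (rule ex_ex1I)
    show "\<exists>c. ?P c" by (rule as_limit[OF PS iid])
  next
    fix c1 c2 assume "?P c1" "?P c2"
    then have "AE \<omega> in M. (\<lambda>n. opt_score R n (\<lambda>i. X i \<omega>) (\<lambda>i. Y i \<omega>) / real n) \<longlonglongrightarrow> c1 \<and>
        (\<lambda>n. opt_score R n (\<lambda>i. X i \<omega>) (\<lambda>i. Y i \<omega>) / real n) \<longlonglongrightarrow> c2" by (rule AE_conjI)
    then have "\<exists>\<omega>. (\<lambda>n. opt_score R n (\<lambda>i. X i \<omega>) (\<lambda>i. Y i \<omega>) / real n) \<longlonglongrightarrow> c1 \<and>
        (\<lambda>n. opt_score R n (\<lambda>i. X i \<omega>) (\<lambda>i. Y i \<omega>) / real n) \<longlonglongrightarrow> c2" by (rule AE_ex[OF PS])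
    then obtain \<omega> where "(\<lambda>n. opt_score R n (\<lambda>i. X i \<omega>) (\<lambda>i. Y i \<omega>) / real n) \<longlonglongrightarrow> c1"
        "(\<lambda>n. opt_score R n (\<lambda>i. X i \<omega>) (\<lambda>i. Y i \<omega>) / real n) \<longlonglongrightarrow> c2"
      by blast
    then show "c1 = c2" by (rule LIMSEQ_unique)
  qed
  then have "?P (THE c. ?P c)" by (rule theI')
  moreover have "lam M X Y R = (THE c. ?P c)" unfolding lam_def ..
  ultimately show ?thesis by (simp only:)
qed

lemma limit_by_subseq:
  fixes w :: "nat \<Rightarrow> real"
  assumes B: "\<And>n. \<bar>w n\<bar> \<le> B"
    and sub: "\<And>r l. strict_mono r \<Longrightarrow> (w \<circ> r) \<longlonglongrightarrow> l \<Longrightarrow> l = y0"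
  shows "w \<longlonglongrightarrow> y0"
proof (rule ccontr)
  assume nc: "\<not> w \<longlonglongrightarrow> y0"
  have "\<not> (\<forall>e>0. eventually (\<lambda>n. dist (w n) y0 < e) sequentially)"
    using nc tendsto_iff[of w y0 sequentially] by argo
  then obtain e where e: "e > 0" and fr: "\<not> eventually (\<lambda>n. dist (w n) y0 < e) sequentially"
    by auto
  define I where "I = {n. \<bar>w n - y0\<bar> \<ge> e}"
  have "infinite I"
  proof
    assume "finite I"
    then obtain N where N: "\<forall>n\<in>I. n < N"
      using \<open>finite I\<close> finite_nat_set_iff_bounded by auto
    have "eventually (\<lambda>n. dist (w n) y0 < e) sequentially"
    proof (rule eventually_sequentiallyI[of N])
      fix n assume "N \<le> n"
      then have "n \<notin> I" using N by auto
      then show "dist (w n) y0 < e" by (simp add: I_def dist_real_def)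
    qed
    with fr show False by contradiction
  qed
  then obtain r :: "nat \<Rightarrow> nat" where r: "strict_mono r" "\<forall>n. r n \<in> I" using infinite_enumerate[OF \<open>infinite I\<close>] by blast
  have "bounded (range (w \<circ> r))" unfolding bounded_iff by (intro exI[of _ B]) (auto simp: B)
  from bounded_imp_convergent_subsequence[OF this]
  obtain l s where s: "strict_mono s" "((w \<circ> r) \<circ> s) \<longlonglongrightarrow> l" by auto
  have rs: "strict_mono (r \<circ> s)" using r(1) s(1) by (rule strict_mono_o)
  have "w \<circ> (r \<circ> s) = (w \<circ> r) \<circ> s" by (simp add: o_assoc)
  then have "l = y0" using sub[OF rs] s(2) by simp
  moreover have "\<bar>l - y0\<bar> \<ge> e"
  proof -
    have "(\<lambda>k. \<bar>((w \<circ> r) \<circ> s) k - y0\<bar>) \<longlonglongrightarrow> \<bar>l - y0\<bar>" by (rule tendsto_rabs[OF tendsto_diff[OF s(2) tendsto_const]])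
    moreover have "\<forall>k. \<bar>((w \<circ> r) \<circ> s) k - y0\<bar> \<ge> e" using r(2) by (simp add: I_def)
    ultimately show ?thesis by (intro LIMSEQ_le_const) auto
  qed
  ultimately show False using e by simp
qed

lemma Kb_le:
  fixes R :: "'a::finite score"
  assumes "\<And>u v. \<bar>R u v\<bar> \<le> B"
  shows "Kb R \<le> B"
  unfolding Kb_def using assms by (intro Max.boundedI) auto

lemma lim_abs_diff_le:
  fixes f g :: "nat \<Rightarrow> real"
  assumes "f \<longlonglongrightarrow> a" "g \<longlonglongrightarrow> b" "\<And>n. \<bar>f n - g n\<bar> \<le> D"
  shows "\<bar>a - b\<bar> \<le> D"
proof -
  have "(\<lambda>n. \<bar>f n - g n\<bar>) \<longlonglongrightarrow> \<bar>a - b\<bar>" by (rule tendsto_rabs[OF tendsto_diff[OF assms(1,2)]])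
  then show ?thesis by (rule LIMSEQ_le_const2) (use assms(3) in auto)
qed

definition sab :: "'a score \<Rightarrow> 'a score \<Rightarrow> real \<Rightarrow> real \<Rightarrow> 'a score" where
  "sab S T a b = (\<lambda>u v. a * S u v + b * T u v)"

lemma lam_lip:
  fixes M :: "'w measure" and p :: "'a::finite pmf" and S T :: "'a score"
  assumes PS: "prob_space M" and iid: "iid_letters M p X Y"
  shows "\<bar>lam M X Y (sab S T a b) - lam M X Y (sab S T a' b')\<bar> \<le> 3 * (\<bar>a - a'\<bar> * Kb S + \<bar>b - b'\<bar> * Kb T)"
proof -
  let ?L = "\<lambda>R \<omega> n. opt_score R n (\<lambda>i. X i \<omega>) (\<lambda>i. Y i \<omega>) / real n"
  have "AE \<omega> in M. ?L (sab S T a b) \<omega> \<longlonglongrightarrow> lam M X Y (sab S T a b) \<and> ?L (sab S T a' b') \<omega> \<longlonglongrightarrow> lam M X Y (sab S T a' b')"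
    by (intro AE_conjI lam_limit[OF PS iid])
  then obtain \<omega> where \<omega>: "?L (sab S T a b) \<omega> \<longlonglongrightarrow> lam M X Y (sab S T a b)" "?L (sab S T a' b') \<omega> \<longlonglongrightarrow> lam M X Y (sab S T a' b')"
    using AE_ex[OF PS] by blast
  define D where "D = \<bar>a - a'\<bar> * Kb S + \<bar>b - b'\<bar> * Kb T"
  have KD: "Kb (\<lambda>u v. sab S T a b u v - sab S T a' b' u v) \<le> D"
  proof (rule Kb_le)
    fix u v
    have "\<bar>sab S T a b u v - sab S T a' b' u v\<bar> = \<bar>(a - a') * S u v + (b - b') * T u v\<bar>"
      by (simp add: sab_def algebra_simps)
    also have "\<dots> \<le> \<bar>a - a'\<bar> * \<bar>S u v\<bar> + \<bar>b - b'\<bar> * \<bar>T u v\<bar>"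
      by (rule order.trans[OF abs_triangle_ineq]) (simp add: abs_mult)
    also have "\<dots> \<le> D" unfolding D_def
      by (intro add_mono mult_left_mono Kb_bound) auto
    finally show "\<bar>sab S T a b u v - sab S T a' b' u v\<bar> \<le> D" .
  qed
  have D0: "D \<ge> 0" unfolding D_def using Kb_nonneg[of S] Kb_nonneg[of T] by simp
  have "\<bar>?L (sab S T a b) \<omega> n - ?L (sab S T a' b') \<omega> n\<bar> \<le> 3 * D" for n
  proof (cases "n = 0")
    case True then show ?thesis using D0 by simp
  next
    case False
    then have np: "real n > 0" by simp
    have "\<bar>?L (sab S T a b) \<omega> n - ?L (sab S T a' b') \<omega> n\<bar>
        = \<bar>opt_score (sab S T a b) n (\<lambda>i. X i \<omega>) (\<lambda>i. Y i \<omega>) - opt_score (sab S T a' b') n (\<lambda>i. X i \<omega>) (\<lambda>i. Y i \<omega>)\<bar> / real n"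
      using np by (simp add: diff_divide_distrib[symmetric])
    also have "\<dots> \<le> (3 * real n * D) / real n"
    proof (intro divide_right_mono)
      show "\<bar>opt_score (sab S T a b) n (\<lambda>i. X i \<omega>) (\<lambda>i. Y i \<omega>) - opt_score (sab S T a' b') n (\<lambda>i. X i \<omega>) (\<lambda>i. Y i \<omega>)\<bar>
          \<le> 3 * real n * D"
      proof -
        have "3 * real n * Kb (\<lambda>u v. sab S T a b u v - sab S T a' b' u v) \<le> 3 * real n * D"
          using KD by (intro mult_left_mono) auto
        then show ?thesis
          using opt_score_lipschitz[of "sab S T a b" n "\<lambda>i. X i \<omega>" "\<lambda>i. Y i \<omega>" "sab S T a' b'"] by linarith
      qed
    qed simp
    also have "\<dots> = 3 * D" using np by simp
    finally show ?thesis .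
  qed
  then show ?thesis using lim_abs_diff_le[OF \<omega>] by (simp add: D_def)
qed

lemma core_rat:
  fixes x y :: "nat \<Rightarrow> 'a::finite" and S T :: "'a score" and h :: "real \<Rightarrow> real \<Rightarrow> real"
  assumes good: "\<And>q1 q2 :: rat. (\<lambda>n. opt_score (sab S T (of_rat q1) (of_rat q2)) n x y / real n)
                    \<longlonglongrightarrow> h (of_rat q1) (of_rat q2)"
    and \<pi>: "\<And>n. \<pi> n \<in> opt_alignments S n x y"
    and r: "strict_mono r" and l: "((\<lambda>n. align_score T n (\<pi> n) x y / real n) \<circ> r) \<longlonglongrightarrow> l"
  shows "of_rat q1 * h 1 0 + of_rat q2 * l \<le> h (of_rat q1) (of_rat q2)"
proof -
  define a :: real where "a = of_rat q1"
  define b :: real where "b = of_rat q2"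
  have S: "sab S T 1 0 = S" by (simp add: sab_def)
  have LS: "(\<lambda>n. opt_score S n x y / real n) \<longlonglongrightarrow> h 1 0"
    using good[of 1 0] S by simp
  have f: "(\<lambda>k. a * (opt_score S (r k) x y / real (r k)) + b * (align_score T (r k) (\<pi> (r k)) x y / real (r k)))
      \<longlonglongrightarrow> a * h 1 0 + b * l"
  proof (intro tendsto_add tendsto_mult_left)
    show "(\<lambda>k. opt_score S (r k) x y / real (r k)) \<longlonglongrightarrow> h 1 0"
      using LIMSEQ_subseq_LIMSEQ[OF LS r] by (simp add: o_def)
    show "(\<lambda>k. align_score T (r k) (\<pi> (r k)) x y / real (r k)) \<longlonglongrightarrow> l"
      using l by (simp add: o_def)
  qed
  have g: "(\<lambda>k. opt_score (sab S T a b) (r k) x y / real (r k)) \<longlonglongrightarrow> h a b"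
    using LIMSEQ_subseq_LIMSEQ[OF good[of q1 q2] r] by (simp add: o_def a_def b_def)
  have le: "a * (opt_score S n x y / real n) + b * (align_score T n (\<pi> n) x y / real n)
         \<le> opt_score (sab S T a b) n x y / real n" for n
  proof -
    have pn: "\<pi> n \<in> alignments n" "align_score S n (\<pi> n) x y = opt_score S n x y"
      using \<pi>[of n] by (auto simp: opt_alignments_def)
    have "a * opt_score S n x y + b * align_score T n (\<pi> n) x y = align_score (sab S T a b) n (\<pi> n) x y"
      unfolding sab_def align_score_lin pn(2) ..
    also have "\<dots> \<le> opt_score (sab S T a b) n x y" by (rule opt_score_ge[OF pn(1)])
    finally have "(a * opt_score S n x y + b * align_score T n (\<pi> n) x y) / real n
        \<le> opt_score (sab S T a b) n x y / real n" by (intro divide_right_mono) auto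
    then show ?thesis by (simp add: add_divide_distrib)
  qed
  have "a * h 1 0 + b * l \<le> h a b"
    by (rule LIMSEQ_le[OF f g]) (use le in auto)
  then show ?thesis by (simp add: a_def b_def)
qed

lemma rat_approx:
  fixes a d :: real
  assumes "d > 0"
  obtains q :: rat where "\<bar>of_rat q - a\<bar> < d"
proof -
  obtain t where t: "t \<in> \<rat>" "a - d < t" "t < a + d" using Rats_dense_in_real[of "a - d" "a + d"] assms by auto
  then obtain q where q: "t = of_rat q" by (auto elim: Rats_cases)
  have "\<bar>of_rat q - a\<bar> < d" using t q by (simp add: abs_less_iff)
  then show ?thesis by (rule that)
qed

lemma core_real:
  fixes h :: "real \<Rightarrow> real \<Rightarrow> real" and KS KT h10 l :: real
  assumes rat: "\<And>q1 q2 :: rat. of_rat q1 * h10 + of_rat q2 * l \<le> h (of_rat q1) (of_rat q2)"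
    and lip: "\<And>a b a' b'. \<bar>h a b - h a' b'\<bar> \<le> 3 * (\<bar>a - a'\<bar> * KS + \<bar>b - b'\<bar> * KT)"
    and KS: "KS \<ge> 0" and KT: "KT \<ge> 0"
  shows "a * h10 + b * l \<le> h a b"
proof (rule field_le_epsilon)
  fix e :: real assume e: "e > 0"
  define K where "K = 3 * KS + 3 * KT + \<bar>h10\<bar> + \<bar>l\<bar> + 1"
  have K: "K > 0" using KS KT by (simp add: K_def add_pos_nonneg)
  define d where "d = e / K"
  have d: "d > 0" using e K by (simp add: d_def)
  obtain q1 :: rat where q1: "\<bar>of_rat q1 - a\<bar> < d" using rat_approx[OF d] by blast
  obtain q2 :: rat where q2: "\<bar>of_rat q2 - b\<bar> < d" using rat_approx[OF d] by blast
  define a' :: real where "a' = of_rat q1"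
  define b' :: real where "b' = of_rat q2"
  have qa: "\<bar>a' - a\<bar> \<le> d" and qb: "\<bar>b' - b\<bar> \<le> d" using q1 q2 by (auto simp: a'_def b'_def)
  have r: "a' * h10 + b' * l \<le> h a' b'" using rat[of q1 q2] by (simp add: a'_def b'_def)
  have h: "h a' b' \<le> h a b + 3 * (\<bar>a' - a\<bar> * KS + \<bar>b' - b\<bar> * KT)" using lip[of a' b' a b] by linarith
  have t1: "(a - a') * h10 \<le> d * \<bar>h10\<bar>"
  proof -
    have "(a - a') * h10 \<le> \<bar>a - a'\<bar> * \<bar>h10\<bar>" by (metis abs_ge_self abs_mult)
    also have "\<dots> \<le> d * \<bar>h10\<bar>" using qa by (intro mult_right_mono) (auto simp: abs_minus_commute)
    finally show ?thesis .
  qed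
  have t2: "(b - b') * l \<le> d * \<bar>l\<bar>"
  proof -
    have "(b - b') * l \<le> \<bar>b - b'\<bar> * \<bar>l\<bar>" by (metis abs_ge_self abs_mult)
    also have "\<dots> \<le> d * \<bar>l\<bar>" using qb by (intro mult_right_mono) (auto simp: abs_minus_commute)
    finally show ?thesis .
  qed
  have t3: "\<bar>a' - a\<bar> * KS \<le> d * KS" using qa KS by (intro mult_right_mono) auto
  have t4: "\<bar>b' - b\<bar> * KT \<le> d * KT" using qb KT by (intro mult_right_mono) auto
  have "a * h10 + b * l = (a' * h10 + b' * l) + (a - a') * h10 + (b - b') * l" by (simp add: algebra_simps)
  also have "\<dots> \<le> h a b + (3 * (d * KS + d * KT) + d * \<bar>h10\<bar> + d * \<bar>l\<bar>)"
  proof -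
    have "3 * (\<bar>a' - a\<bar> * KS + \<bar>b' - b\<bar> * KT) \<le> 3 * (d * KS + d * KT)" using t3 t4 by simp
    then have A: "h a' b' \<le> h a b + 3 * (d * KS + d * KT)" using h by (meson add_left_mono order.trans)
    show ?thesis using add_mono[OF add_mono[OF order.trans[OF r A] t1] t2] by (simp add: algebra_simps)
  qed
  also have "3 * (d * KS + d * KT) + d * \<bar>h10\<bar> + d * \<bar>l\<bar> \<le> d * K"
    using d by (simp add: K_def algebra_simps)
  also have "d * K = e" using K by (simp add: d_def)
  finally show "a * h10 + b * l \<le> h a b + e" by simp
qed

theorem mainTheorem9:
  fixes M :: "'w measure" and p :: "'a::finite pmf"
    and X Y :: "nat \<Rightarrow> 'w \<Rightarrow> 'a" and S T :: "'a score" and x0 y0 :: real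
  assumes "prob_space M"
    and "iid_letters M p X Y"
    and "symmetric_score S" and "symmetric_score T"
    and "(x0, y0) \<in> SET M X Y S T"
    and "\<forall>(x, y) \<in> SET M X Y S T. x \<le> x0 \<and> (x = x0 \<longrightarrow> y = y0)"
  shows "AE \<omega> in M.
      (\<lambda>n. Max ((\<lambda>\<pi>. align_score T n \<pi> (\<lambda>i. X i \<omega>) (\<lambda>i. Y i \<omega>) / real n)
                 ` opt_alignments S n (\<lambda>i. X i \<omega>) (\<lambda>i. Y i \<omega>))) \<longlonglongrightarrow> y0
    \<and> (\<lambda>n. Min ((\<lambda>\<pi>. align_score T n \<pi> (\<lambda>i. X i \<omega>) (\<lambda>i. Y i \<omega>) / real n)
                 ` opt_alignments S n (\<lambda>i. X i \<omega>) (\<lambda>i. Y i \<omega>))) \<longlonglongrightarrow> y0"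
proof -
  note PS = assms(1) and iid = assms(2)
  define h where "h a b = lam M X Y (sab S T a b)" for a b
  have SETh: "(u, v) \<in> SET M X Y S T \<longleftrightarrow> (\<forall>a b. a * u + b * v \<le> h a b)" for u v
    unfolding SET_def h_def sab_def by simp
  have x0h: "x0 \<le> h 1 0" using assms(5) unfolding SETh by (metis add_0_right mult_1 mult_zero_left)
  have uniq: "ys = y0" if "\<forall>a b. a * h 1 0 + b * ys \<le> h a b" for ys
  proof -
    have "(h 1 0, ys) \<in> SET M X Y S T" using that by (simp add: SETh)
    then have "h 1 0 \<le> x0 \<and> (h 1 0 = x0 \<longrightarrow> ys = y0)" using assms(6) by blast
    with x0h show ?thesis by linarith
  qed
  have lip: "\<bar>h a b - h a' b'\<bar> \<le> 3 * (\<bar>a - a'\<bar> * Kb S + \<bar>b - b'\<bar> * Kb T)" for a b a' b'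
    unfolding h_def by (rule lam_lip[OF PS iid])
  have AEq: "AE \<omega> in M. \<forall>q::rat \<times> rat. (\<lambda>n. opt_score (sab S T (of_rat (fst q)) (of_rat (snd q))) n
      (\<lambda>i. X i \<omega>) (\<lambda>i. Y i \<omega>) / real n) \<longlonglongrightarrow> h (of_rat (fst q)) (of_rat (snd q))"
    unfolding AE_all_countable h_def by (intro allI lam_limit[OF PS iid])
  then show ?thesis
  proof (rule AE_mp[OF _ AE_I2], intro impI)
    fix \<omega>
    assume good: "\<forall>q::rat \<times> rat. (\<lambda>n. opt_score (sab S T (of_rat (fst q)) (of_rat (snd q))) n
      (\<lambda>i. X i \<omega>) (\<lambda>i. Y i \<omega>) / real n) \<longlonglongrightarrow> h (of_rat (fst q)) (of_rat (snd q))"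
    define x where "x = (\<lambda>i. X i \<omega>)"
    define y where "y = (\<lambda>i. Y i \<omega>)"
    define f where "f n \<pi> = align_score T n \<pi> x y / real n" for n \<pi>
    define A where "A n = opt_alignments S n x y" for n
    have good': "(\<lambda>n. opt_score (sab S T (of_rat q1) (of_rat q2)) n x y / real n) \<longlonglongrightarrow> h (of_rat q1) (of_rat q2)"
      for q1 q2 :: rat
      using good[rule_format, of "(q1, q2)"] by (simp add: x_def y_def)
    have conv: "(\<lambda>n. f n (\<pi> n)) \<longlonglongrightarrow> y0" if \<pi>: "\<And>n. \<pi> n \<in> A n" for \<pi>
    proof (rule limit_by_subseq[where B = "3 * Kb T"])
      fix n
      have pn: "\<pi> n \<in> alignments n" using \<pi>[of n] by (simp add: A_def opt_alignments_def)
      show "\<bar>f n (\<pi> n)\<bar> \<le> 3 * Kb T"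
      proof (cases "n = 0")
        case True then show ?thesis using Kb_nonneg[of T] by (simp add: f_def)
      next
        case False
        then have np: "real n > 0" by simp
        have "\<bar>f n (\<pi> n)\<bar> = \<bar>align_score T n (\<pi> n) x y\<bar> / real n" using np by (simp add: f_def abs_divide)
        also have "\<dots> \<le> (3 * real n * Kb T) / real n"
          by (intro divide_right_mono align_score_bound pn) simp
        also have "\<dots> = 3 * Kb T" using np by simp
        finally show ?thesis .
      qed
    next
      fix r l assume r: "strict_mono r" and l: "((\<lambda>n. f n (\<pi> n)) \<circ> r) \<longlonglongrightarrow> l"
      have \<pi>': "\<And>n. \<pi> n \<in> opt_alignments S n x y" using \<pi> by (simp add: A_def)
      have l': "((\<lambda>n. align_score T n (\<pi> n) x y / real n) \<circ> r) \<longlonglongrightarrow> l" using l by (simp add: f_def)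
      have ratq: "of_rat q1 * h 1 0 + of_rat q2 * l \<le> h (of_rat q1) (of_rat q2)" for q1 q2 :: rat
        by (rule core_rat[OF good' \<pi>' r l'])
      have "\<forall>a b. a * h 1 0 + b * l \<le> h a b"
        by (intro allI core_real[OF ratq lip Kb_nonneg Kb_nonneg])
      then show "l = y0" by (rule uniq)
    qed
    have ex: "\<exists>\<pi>. \<pi> \<in> A n \<and> f n \<pi> = Max (f n ` A n)" "\<exists>\<pi>. \<pi> \<in> A n \<and> f n \<pi> = Min (f n ` A n)" for n
    proof -
      have fin: "finite (f n ` A n)" "f n ` A n \<noteq> {}"
        using finite_opt_alignments[of S n x y] opt_alignments_ne[of S n x y] by (auto simp: A_def)
      show "\<exists>\<pi>. \<pi> \<in> A n \<and> f n \<pi> = Max (f n ` A n)" using Max_in[OF fin] by (metis imageE)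
      show "\<exists>\<pi>. \<pi> \<in> A n \<and> f n \<pi> = Min (f n ` A n)" using Min_in[OF fin] by (metis imageE)
    qed
    obtain \<pi>M where \<pi>M: "\<And>n. \<pi>M n \<in> A n \<and> f n (\<pi>M n) = Max (f n ` A n)"
      using choice[of "\<lambda>n \<pi>. \<pi> \<in> A n \<and> f n \<pi> = Max (f n ` A n)"] ex(1) by blast
    obtain \<pi>m where \<pi>m: "\<And>n. \<pi>m n \<in> A n \<and> f n (\<pi>m n) = Min (f n ` A n)"
      using choice[of "\<lambda>n \<pi>. \<pi> \<in> A n \<and> f n \<pi> = Min (f n ` A n)"] ex(2) by blast
    have c1: "(\<lambda>n. Max (f n ` A n)) \<longlonglongrightarrow> y0"
      using conv[of \<pi>M] \<pi>M by simp
    have c2: "(\<lambda>n. Min (f n ` A n)) \<longlonglongrightarrow> y0"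
      using conv[of \<pi>m] \<pi>m by simp
    show "(\<lambda>n. Max ((\<lambda>\<pi>. align_score T n \<pi> (\<lambda>i. X i \<omega>) (\<lambda>i. Y i \<omega>) / real n)
                 ` opt_alignments S n (\<lambda>i. X i \<omega>) (\<lambda>i. Y i \<omega>))) \<longlonglongrightarrow> y0
    \<and> (\<lambda>n. Min ((\<lambda>\<pi>. align_score T n \<pi> (\<lambda>i. X i \<omega>) (\<lambda>i. Y i \<omega>) / real n)
                 ` opt_alignments S n (\<lambda>i. X i \<omega>) (\<lambda>i. Y i \<omega>))) \<longlonglongrightarrow> y0"
      using c1 c2 unfolding f_def A_def x_def y_def by simp
  qed
qed

end
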